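(* Let $X^*\in\mathbb{S}^n_{++}$ satisfy $\sum_{j=1}^k m^j_{X^*}Y_j+\big(\sum_{j=1}^k o^j_{X^*}\big)X^*=0$, and let $\mathcal{K}\subset\mathbb{S}^n_{++}$ be a compact set with $X^*\in\mathcal{K}$. Then there exist constants $O,K>0$ such that for all $X\in\mathcal{K}$ and all integers $p\ge1$, $$\|T_p(X)-X\|\le\frac{K}{p}\|X-X^*\|+\frac{O}{p^2}.$$ In particular $\|T_p(X^* )-X^*\|\le O/p^2$ for all $p\ge1$.
   Context: $\mathbb{S}^n_{++}$ denotes the set of real symmetric positive definite $n\times n$ matrices and $\|\cdot\|$ the Frobenius norm. For $X,Y\in\mathbb{S}^n_{++}$ let $\alpha=\lambda_{\min}(YX^{-1})$, $\beta=\lambda_{\max}(YX^{-1})$. For $0<\alpha\le\beta$ and $t\in\mathbb{R}$ set $\varphi_{\alpha\beta}(t)=\frac{\beta^t-\alpha^t}{\beta-\alpha}$ and $\psi_{\alpha\beta}(t)=\frac{\beta\alpha^t-\alpha\beta^t}{\beta-\alpha}$ if $\beta>\alpha$, and $\varphi_{\alpha\beta}(t)=t\alpha^{t-1}$, $\psi_{\alpha\beta}(t)=(1-t)\alpha^t$ if $\beta=\alpha$. The Thompson geodesic is $X*_tY=\varphi_{\alpha\beta}(t)Y+\psi_{\alpha\beta}(t)X$. Fix $k\ge1$ and an ordered tuple $(Y_1,\dots,Y_k)$ in $\mathbb{S}^n_{++}$. For $i\in\mathbb{N}$ let $j(i)\in\{1,\dots,k\}$ with $j(i)\equiv i\pmod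 k$; $S_i(X)=X*_{\frac{1}{i+1}}Y_{j(i)}$, and for $p\in\mathbb{Z}_{\ge0}$, $T_p=S_{(p+1)k}\circ\cdots\circ S_{pk+1}$. For $1\le j\le k$ and $X\in\mathbb{S}^n_{++}$, with $\alpha=\lambda_{\min}(Y_jX^{-1})$, $\beta=\lambda_{\max}(Y_jX^{-1})$: $m^j_X=\frac{\log\beta-\log\alpha}{\beta-\alpha}$, $o^j_X=\frac{\beta\log\alpha-\alpha\log\beta}{\beta-\alpha}$ if $\beta>\alpha$, and $m^j_X=1/\alpha$, $o^j_X=\log\alpha-1$ if $\beta=\alpha$ (these are the $t$-derivatives at $t=0$ of $\varphi_{\alpha\beta}$ and $\psi_{\alpha\beta}$). *)

theory Defs
  imports "HOL-Analysis.Analysis"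
begin

type_synonym 'n mat = "real^'n^'n"

definition spd :: "'n::finite mat \<Rightarrow> bool" where
  "spd A \<longleftrightarrow> transpose A = A \<and> (\<forall>x::real^'n. x \<noteq> 0 \<longrightarrow> x \<bullet> (A *v x) > 0)"

definition eigenvalues :: "'n::finite mat \<Rightarrow> real set" where
  "eigenvalues M = {l. \<exists>v::real^'n. v \<noteq> 0 \<and> M *v v = l *\<^sub>R v}"

definition lam_min :: "'n::finite mat \<Rightarrow> real" where
  "lam_min M = Inf (eigenvalues M)"

definition lam_max :: "'n::finite mat \<Rightarrow> real" where
  "lam_max M = Sup (eigenvalues M)"

definition phi :: "real \<Rightarrow> real \<Rightarrow> real \<Rightarrow> real" where
  "phi a b t = (if b > a then (b powr t - a powr t) / (b - a) else t * a powr (t - 1))"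

definition psi :: "real \<Rightarrow> real \<Rightarrow> real \<Rightarrow> real" where
  "psi a b t = (if b > a then (b * a powr t - a * b powr t) / (b - a) else (1 - t) * a powr t)"

definition thompson_geo :: "'n::finite mat \<Rightarrow> real \<Rightarrow> 'n mat \<Rightarrow> 'n mat" where
  "thompson_geo X t Y =
     (let a = lam_min (Y ** matrix_inv X); b = lam_max (Y ** matrix_inv X)
      in phi a b t *\<^sub>R Y + psi a b t *\<^sub>R X)"

definition jidx :: "nat \<Rightarrow> nat \<Rightarrow> nat" where
  "jidx k i = (if i mod k = 0 then k else i mod k)"

definition S_map :: "(nat \<Rightarrow> 'n::finite mat) \<Rightarrow> nat \<Rightarrow> nat \<Rightarrow> 'n mat \<Rightarrow> 'n mat" where
  "S_map Y k i X = thompson_geo X (1 / (real i + 1)) (Y (jidx k i))"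

text \<open>T_p = S_{(p+1)k} o ... o S_{pk+1}  (S_{pk+1} applied first).\<close>
definition T_map :: "(nat \<Rightarrow> 'n::finite mat) \<Rightarrow> nat \<Rightarrow> nat \<Rightarrow> 'n mat \<Rightarrow> 'n mat" where
  "T_map Y k p X = fold (S_map Y k) [p * k + 1 ..< (p + 1) * k + 1] X"

definition m_coef :: "'n::finite mat \<Rightarrow> 'n mat \<Rightarrow> real" where
  "m_coef Yj X =
     (let a = lam_min (Yj ** matrix_inv X); b = lam_max (Yj ** matrix_inv X)
      in if b > a then (ln b - ln a) / (b - a) else 1 / a)"

definition o_coef :: "'n::finite mat \<Rightarrow> 'n mat \<Rightarrow> real" where
  "o_coef Yj X =
     (let a = lam_min (Yj ** matrix_inv X); b = lam_max (Yj ** matrix_inv X)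
      in if b > a then (b * ln a - a * ln b) / (b - a) else ln a - 1)"

end

theory Submission
  imports Defs
begin

definition qf :: "real^'n::finite^'n \<Rightarrow> real^'n \<Rightarrow> real" where
  "qf A v = v \<bullet> (A *v v)"

lemma qf_add: "qf (A + B) v = qf A v + qf B v"
  by (simp add: qf_def matrix_vector_mult_add_rdistrib inner_add_right)
lemma qf_diff: "qf (A - B) v = qf A v - qf B v"
  by (simp add: qf_def matrix_vector_mult_diff_rdistrib inner_diff_right)
lemma qf_scale: "qf (c *\<^sub>R A) v = c * qf A v"
  by (simp add: qf_def scaleR_matrix_vector_assoc[symmetric])
lemma qf_scalev: "qf A (c *\<^sub>R v) = c^2 * qf A v"
  by (simp add: qf_def matrix_vector_mult_scaleR power2_eq_square)

lemma sym_inner: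
  fixes A :: "real^'n::finite^'n"
  assumes "transpose A = A"
  shows "x \<bullet> (A *v y) = (A *v x) \<bullet> y"
proof -
  have "x \<bullet> (A *v y) = (x v* A) \<bullet> y" by (simp add: dot_lmul_matrix)
  also have "x v* A = transpose A *v x" by (simp add: transpose_matrix_vector)
  finally show ?thesis using assms by simp
qed

lemma norm_mv:
  fixes A :: "real^'n::finite^'m::finite"
  shows "norm (A *v x) \<le> real CARD('m) * norm A * norm x"
proof -
  have "norm (A *v x) \<le> (\<Sum>i\<in>UNIV. \<bar>(A *v x) $ i\<bar>)"
    by (rule norm_le_l1_cart)
  also have "\<dots> \<le> (\<Sum>i::'m\<in>UNIV. norm A * norm x)"
  proof (rule sum_mono)
    fix i
    have "\<bar>(A *v x) $ i\<bar> \<le> norm(A $ i) * norm x"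
      by (simp add: matrix_mult_dot Cauchy_Schwarz_ineq2)
    also have "\<dots> \<le> norm A * norm x"
      by (rule mult_right_mono) (simp_all add: Finite_Cartesian_Product.norm_nth_le)
    finally show "\<bar>(A *v x) $ i\<bar> \<le> norm A * norm x" .
  qed
  finally show ?thesis by simp
qed

lemma qf_bound:
  fixes A :: "real^'n::finite^'n"
  shows "\<bar>qf A v\<bar> \<le> real CARD('n) * norm A * (norm v)^2"
proof -
  have "\<bar>qf A v\<bar> \<le> norm v * norm (A *v v)" unfolding qf_def by (rule Cauchy_Schwarz_ineq2)
  also have "\<dots> \<le> norm v * (real CARD('n) * norm A * norm v)"
    by (rule mult_left_mono[OF norm_mv]) simp
  finally show ?thesis by (simp add: power2_eq_square algebra_simps)
qed

lemma spd_pos: "spd X \<Longrightarrow> v \<noteq> 0 \<Longrightarrow> qf X v > 0"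
  by (simp add: spd_def qf_def)

lemma spd_nonneg: "spd X \<Longrightarrow> qf X v \<ge> 0"
  by (cases "v = 0") (auto simp: qf_def dest: spd_pos[of X v])

lemma spd_inv:
  fixes X :: "real^'n::finite^'n"
  assumes "spd X"
  shows "matrix_inv X ** X = mat 1" "X ** matrix_inv X = mat 1"
proof -
  have "\<forall>x. X *v x = 0 \<longrightarrow> x = 0"
    using assms by (auto simp: spd_def)
  then have "\<exists>B. B ** X = mat 1" by (simp add: matrix_left_invertible_ker)
  then have "invertible X" by (simp add: invertible_left_inverse)
  then have "X ** matrix_inv X = mat 1 \<and> matrix_inv X ** X = mat 1"
    unfolding invertible_def matrix_inv_def by (rule someI_ex)
  then show "matrix_inv X ** X = mat 1" "X ** matrix_inv X = mat 1" by auto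
qed

lemma stationary:
  fixes B :: "real^'n::finite^'n"
  assumes sym: "transpose B = B" and le: "\<And>v. qf B v \<le> 0" and z: "qf B u = 0"
  shows "B *v u = 0"
proof -
  define h where "h = B *v u"
  define c where "c = h \<bullet> (B *v u)"
  define d where "d = qf B h"
  have key: "qf B (u + s *\<^sub>R h) = 2 * s * c + s^2 * d" for s
  proof -
    have "qf B (u + s *\<^sub>R h) = u \<bullet> (B *v u) + s * (u \<bullet> (B *v h)) + s * (h \<bullet> (B *v u)) + s^2 * (h \<bullet> (B *v h))"
      by (simp add: qf_def matrix_vector_right_distrib matrix_vector_mult_scaleR inner_add_left inner_add_right power2_eq_square algebra_simps)
    also have "u \<bullet> (B *v h) = h \<bullet> (B *v u)"
      using sym_inner[OF sym, of u h] by (simp add: inner_commute)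
    finally show ?thesis using z by (simp add: qf_def c_def d_def)
  qed
  define D where "D = \<bar>d\<bar> + 1"
  have D0: "D > 0" by (simp add: D_def)
  define s where "s = c / D"
  have "2 * s * c + s^2 * d \<le> 0" using le[of "u + s *\<^sub>R h"] key by simp
  moreover have "(2 * s * c + s^2 * d) * D^2 = c^2 * (2 * D + d)"
    using D0 by (simp add: s_def power2_eq_square field_simps)
  ultimately have "c^2 * (2 * D + d) \<le> 0"
    by (metis mult_nonpos_nonneg zero_le_power2)
  moreover have "2 * D + d > 0" unfolding D_def by (cases "d \<ge> 0") auto
  ultimately have "c^2 \<le> 0"
    by (metis mult_le_0_iff not_le zero_le_power2 order_le_less)
  then have "c = 0" by simp
  then show ?thesis by (simp add: c_def h_def)
qed


lemma sphere_ne: "{v::real^'n::finite. norm v = 1} \<noteq> {}"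
proof -
  obtain i :: 'n where True by simp
  then show ?thesis using norm_axis_1[of i] by blast
qed

lemma sphere_compact: "compact {v::real^'n::finite. norm v = 1}"
proof -
  have "{v::real^'n. norm v = 1} = sphere 0 1" by (auto simp: sphere_def)
  then show ?thesis by simp
qed

lemma rq_scale:
  fixes X Y :: "real^'n::finite^'n"
  assumes "v \<noteq> 0"
  shows "qf Y ((1/norm v) *\<^sub>R v) / qf X ((1/norm v) *\<^sub>R v) = qf Y v / qf X v"
  using assms by (simp add: qf_scalev)
lemma geneig_max:
  fixes X Y :: "real^'n::finite^'n"
  assumes X: "spd X" and Y: "spd Y"
  shows "(\<forall>v. qf Y v \<le> lam_max (Y ** matrix_inv X) * qf X v) \<and>
         (\<exists>u. u \<noteq> 0 \<and> qf Y u = lam_max (Y ** matrix_inv X) * qf X u)"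
proof -
  let ?S = "{v::real^'n. norm v = 1}"
  let ?R = "\<lambda>v. qf Y v / qf X v"
  have cont: "continuous_on ?S ?R"
  proof -
    have "qf X v \<noteq> 0" if "v \<in> ?S" for v
    proof -
      have "v \<noteq> 0" using that by auto
      then show ?thesis using spd_pos[OF X, of v] by auto
    qed
    then show ?thesis unfolding qf_def
      by (intro continuous_intros) auto
  qed
  obtain u where uS: "u \<in> ?S" and umax: "\<And>v. v \<in> ?S \<Longrightarrow> ?R v \<le> ?R u"
    using continuous_attains_sup[OF sphere_compact sphere_ne cont] by blast
  define l where "l = ?R u"
  have u0: "u \<noteq> 0" using uS by auto
  have Xu: "qf X u > 0" using spd_pos[OF X u0] .
  have le: "qf Y v \<le> l * qf X v" for v
  proof (cases "v = 0")
    case True then show ?thesis by (simp add: qf_def)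
  next
    case False
    have "?R v \<le> l" using umax[of "(1/norm v) *\<^sub>R v"] rq_scale[OF False, of Y X] False
      by (simp add: l_def)
    moreover have "qf X v > 0" using spd_pos[OF X False] .
    ultimately show ?thesis by (simp add: divide_le_eq)
  qed
  have equ: "qf Y u = l * qf X u" using Xu by (simp add: l_def)
  define B where "B = Y - l *\<^sub>R X"
  have symB: "transpose B = B" using X Y
    by (simp add: B_def spd_def transpose_def vec_eq_iff)
  have "B *v u = 0"
    by (rule stationary[OF symB]) (auto simp: B_def qf_diff qf_scale le equ)
  then have Yu: "Y *v u = l *\<^sub>R (X *v u)"
    by (simp add: B_def matrix_vector_mult_diff_rdistrib scaleR_matrix_vector_assoc)
  have inv1: "matrix_inv X ** X = mat 1" and inv2: "X ** matrix_inv X = mat 1"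
    using spd_inv[OF X] by auto
  have Xu0: "X *v u \<noteq> 0"
    using Xu by (auto simp: qf_def)
  have "matrix_inv X *v (X *v u) = u" by (simp add: matrix_vector_mul_assoc inv1)
  then have ev: "(Y ** matrix_inv X) *v (X *v u) = l *\<^sub>R (X *v u)"
    using Yu by (subst matrix_vector_mul_assoc[symmetric]) simp
  have lin: "l \<in> eigenvalues (Y ** matrix_inv X)"
    unfolding eigenvalues_def mem_Collect_eq
    by (rule exI[where x="X *v u"]) (use Xu0 ev in simp)
  have lub: "e \<le> l" if "e \<in> eigenvalues (Y ** matrix_inv X)" for e
  proof -
    have "\<exists>w. w \<noteq> 0 \<and> (Y ** matrix_inv X) *v w = e *\<^sub>R w"
      using that by (simp add: eigenvalues_def)
    then obtain w where w0: "w \<noteq> 0" and ew: "(Y ** matrix_inv X) *v w = e *\<^sub>R w"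
      by (elim exE conjE)
    define u' where "u' = matrix_inv X *v w"
    have wX: "w = X *v u'"
      by (simp add: u'_def matrix_vector_mul_assoc inv2)
    have u'0: "u' \<noteq> 0" using w0 wX by auto
    have "Y *v u' = e *\<^sub>R (X *v u')"
    proof -
      have "Y *v u' = (Y ** matrix_inv X) *v w"
        unfolding u'_def by (subst matrix_vector_mul_assoc[symmetric]) simp
      also have "\<dots> = e *\<^sub>R (X *v u')" using ew wX by simp
      finally show ?thesis .
    qed
    then have "qf Y u' = e * qf X u'"
      by (simp add: qf_def)
    moreover have "qf X u' > 0" using spd_pos[OF X u'0] .
    moreover have "qf Y u' \<le> l * qf X u'" by (rule le)
    ultimately show ?thesis by simp
  qed
  have "lam_max (Y ** matrix_inv X) = l"
    unfolding lam_max_def by (rule cSup_eq_maximum[OF lin]) (use lub in auto)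
  then show ?thesis using le equ u0 by auto
qed


lemma geneig_min:
  fixes X Y :: "real^'n::finite^'n"
  assumes X: "spd X" and Y: "spd Y"
  shows "(\<forall>v. lam_min (Y ** matrix_inv X) * qf X v \<le> qf Y v) \<and>
         (\<exists>u. u \<noteq> 0 \<and> qf Y u = lam_min (Y ** matrix_inv X) * qf X u)"
proof -
  let ?S = "{v::real^'n. norm v = 1}"
  let ?R = "\<lambda>v. qf Y v / qf X v"
  have cont: "continuous_on ?S ?R"
  proof -
    have "qf X v \<noteq> 0" if "v \<in> ?S" for v
    proof -
      have "v \<noteq> 0" using that by auto
      then show ?thesis using spd_pos[OF X, of v] by auto
    qed
    then show ?thesis unfolding qf_def
      by (intro continuous_intros) auto
  qed
  obtain u where uS: "u \<in> ?S" and umin: "\<And>v. v \<in> ?S \<Longrightarrow> ?R u \<le> ?R v"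
    using continuous_attains_inf[OF sphere_compact sphere_ne cont] by blast
  define l where "l = ?R u"
  have u0: "u \<noteq> 0" using uS by auto
  have Xu: "qf X u > 0" using spd_pos[OF X u0] .
  have le: "l * qf X v \<le> qf Y v" for v
  proof (cases "v = 0")
    case True then show ?thesis by (simp add: qf_def)
  next
    case False
    have "l \<le> ?R v" using umin[of "(1/norm v) *\<^sub>R v"] rq_scale[OF False, of Y X] False
      by (simp add: l_def)
    moreover have "qf X v > 0" using spd_pos[OF X False] .
    ultimately show ?thesis by (simp add: le_divide_eq)
  qed
  have equ: "qf Y u = l * qf X u" using Xu by (simp add: l_def)
  define B where "B = l *\<^sub>R X - Y"
  have symB: "transpose B = B" using X Y
    by (simp add: B_def spd_def transpose_def vec_eq_iff)
  have "B *v u = 0"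
    by (rule stationary[OF symB]) (auto simp: B_def qf_diff qf_scale le equ)
  then have Yu: "Y *v u = l *\<^sub>R (X *v u)"
    by (simp add: B_def algebra_simps matrix_vector_mult_diff_rdistrib scaleR_matrix_vector_assoc)
  have inv1: "matrix_inv X ** X = mat 1" and inv2: "X ** matrix_inv X = mat 1"
    using spd_inv[OF X] by auto
  have Xu0: "X *v u \<noteq> 0"
    using Xu by (auto simp: qf_def)
  have "matrix_inv X *v (X *v u) = u" by (simp add: matrix_vector_mul_assoc inv1)
  then have ev: "(Y ** matrix_inv X) *v (X *v u) = l *\<^sub>R (X *v u)"
    using Yu by (subst matrix_vector_mul_assoc[symmetric]) simp
  have lin: "l \<in> eigenvalues (Y ** matrix_inv X)"
    unfolding eigenvalues_def mem_Collect_eq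
    by (rule exI[where x="X *v u"]) (use Xu0 ev in simp)
  have glb: "l \<le> e" if "e \<in> eigenvalues (Y ** matrix_inv X)" for e
  proof -
    have "\<exists>w. w \<noteq> 0 \<and> (Y ** matrix_inv X) *v w = e *\<^sub>R w"
      using that by (simp add: eigenvalues_def)
    then obtain w where w0: "w \<noteq> 0" and ew: "(Y ** matrix_inv X) *v w = e *\<^sub>R w"
      by (elim exE conjE)
    define u' where "u' = matrix_inv X *v w"
    have wX: "w = X *v u'"
      by (simp add: u'_def matrix_vector_mul_assoc inv2)
    have u'0: "u' \<noteq> 0" using w0 wX by auto
    have "Y *v u' = e *\<^sub>R (X *v u')"
    proof -
      have "Y *v u' = (Y ** matrix_inv X) *v w"
        unfolding u'_def by (subst matrix_vector_mul_assoc[symmetric]) simp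
      also have "\<dots> = e *\<^sub>R (X *v u')" using ew wX by simp
      finally show ?thesis .
    qed
    then have "qf Y u' = e * qf X u'"
      by (simp add: qf_def)
    moreover have "qf X u' > 0" using spd_pos[OF X u'0] .
    moreover have "l * qf X u' \<le> qf Y u'" by (rule le)
    ultimately show ?thesis by simp
  qed
  have "lam_min (Y ** matrix_inv X) = l"
    unfolding lam_min_def by (rule cInf_eq_minimum[OF lin]) (use glb in auto)
  then show ?thesis using le equ u0 by auto
qed

lemma ratio_diff:
  fixes qy x x' n c Cy E :: real
  assumes "0 \<le> qy" "qy \<le> Cy * n" "c * n \<le> x" "c * n \<le> x'" "\<bar>x - x'\<bar> \<le> E * n" "n > 0" "c > 0"
  shows "\<bar>qy / x - qy / x'\<bar> \<le> Cy * E / c^2"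
proof -
  have x0: "x > 0" and x'0: "x' > 0" using assms by (auto intro: less_le_trans[OF mult_pos_pos])
  have E0: "E \<ge> 0" using assms(5,6) by (metis abs_ge_zero order_trans zero_le_mult_iff not_le less_imp_le)
  have "\<bar>qy / x - qy / x'\<bar> = qy * \<bar>x - x'\<bar> / (x * x')"
  proof -
    have "qy / x - qy / x' = qy * (x' - x) / (x * x')" using x0 x'0 by (simp add: field_simps)
    then show ?thesis using x0 x'0 assms(1) by (simp add: abs_mult abs_divide abs_minus_commute)
  qed
  also have "\<dots> \<le> (Cy * n) * (E * n) / ((c * n) * (c * n))"
  proof (rule frac_le)
    show "0 \<le> Cy * n * (E * n)" using assms E0 by (metis mult_nonneg_nonneg order_trans less_imp_le)
    show "qy * \<bar>x - x'\<bar> \<le> Cy * n * (E * n)" using assms by (intro mult_mono) auto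
    show "0 < c * n * (c * n)" using assms by simp
    show "c * n * (c * n) \<le> x * x'" using assms x0 x'0 by (intro mult_mono) auto
  qed
  also have "\<dots> = Cy * E / c^2" using assms by (simp add: field_simps power2_eq_square)
  finally show ?thesis .
qed

definition qbnd :: "real \<Rightarrow> real \<Rightarrow> real^'n::finite^'n \<Rightarrow> bool" where
  "qbnd c C X \<longleftrightarrow> (\<forall>v. c * (norm v)^2 \<le> qf X v \<and> qf X v \<le> C * (norm v)^2)"

lemma lam_bounds:
  fixes X Y :: "real^'n::finite^'n"
  assumes X: "spd X" and Y: "spd Y" and qX: "qbnd c C X" and qY: "qbnd cy Cy Y"
    and c: "c > 0" and cy: "cy > 0"
  shows "cy / C \<le> lam_min (Y ** matrix_inv X) \<and> lam_min (Y ** matrix_inv X) \<le> lam_max (Y ** matrix_inv X)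
         \<and> lam_max (Y ** matrix_inv X) \<le> Cy / c"
proof -
  let ?a = "lam_min (Y ** matrix_inv X)" and ?b = "lam_max (Y ** matrix_inv X)"
  obtain u where u0: "u \<noteq> 0" and ua: "qf Y u = ?a * qf X u" using geneig_min[OF X Y] by blast
  obtain w where w0: "w \<noteq> 0" and wb: "qf Y w = ?b * qf X w" using geneig_max[OF X Y] by blast
  have nu: "(norm u)^2 > 0" and nw: "(norm w)^2 > 0" using u0 w0 by auto
  have Xu: "qf X u > 0" and Xw: "qf X w > 0" using spd_pos[OF X] u0 w0 by auto
  have "cy * (norm u)^2 \<le> qf Y u" using qY by (simp add: qbnd_def)
  then have "cy * (norm u)^2 \<le> ?a * qf X u" using ua by simp
  moreover have "qf X u \<le> C * (norm u)^2" using qX by (simp add: qbnd_def)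
  moreover have a0: "?a > 0"
  proof -
    have "?a * qf X u > 0" using ua spd_pos[OF Y u0] by simp
    then show ?thesis using Xu by (simp add: zero_less_mult_iff)
  qed
  ultimately have "cy * (norm u)^2 \<le> ?a * (C * (norm u)^2)"
    by (meson mult_left_mono order_trans less_imp_le)
  then have "cy \<le> ?a * C" using nu by (simp add: mult.assoc[symmetric])
  moreover have "C > 0"
  proof -
    have "c * (norm u)^2 \<le> C * (norm u)^2" using qX by (meson qbnd_def order_trans)
    then have "c \<le> C" using nu by (simp add: mult_le_cancel_right)
    then show ?thesis using c by linarith
  qed
  ultimately have 1: "cy / C \<le> ?a" by (simp add: divide_le_eq mult.commute)
  have "?a * qf X u \<le> ?b * qf X u" using geneig_max[OF X Y] ua by metis
  then have 2: "?a \<le> ?b" using Xu by simp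
  have "qf Y w \<le> Cy * (norm w)^2" using qY by (simp add: qbnd_def)
  then have "?b * qf X w \<le> Cy * (norm w)^2" using wb by simp
  moreover have "c * (norm w)^2 \<le> qf X w" using qX by (simp add: qbnd_def)
  moreover have "?b > 0" using a0 2 by simp
  ultimately have "?b * (c * (norm w)^2) \<le> Cy * (norm w)^2"
    by (meson mult_left_mono order_trans less_imp_le)
  then have "?b * c \<le> Cy" using nw by (simp add: mult.assoc[symmetric])
  then have 3: "?b \<le> Cy / c" using c by (simp add: le_divide_eq)
  show ?thesis using 1 2 3 by simp
qed

lemma qf_diff_bound:
  fixes X X' :: "real^'n::finite^'n"
  shows "\<bar>qf X v - qf X' v\<bar> \<le> (real CARD('n) * norm (X - X')) * (norm v)^2"
  using qf_bound[of "X - X'" v] by (simp add: qf_diff)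

lemma lam_max_lip:
  fixes X X' Y :: "real^'n::finite^'n"
  assumes X: "spd X" and X': "spd X'" and Y: "spd Y" and qX: "qbnd c C X" and qX': "qbnd c C' X'"
    and qY: "qbnd cy Cy Y" and c: "c > 0"
  shows "lam_max (Y ** matrix_inv X) - lam_max (Y ** matrix_inv X') \<le> Cy * (real CARD('n) * norm (X - X')) / c^2"
proof -
  let ?b = "lam_max (Y ** matrix_inv X)" and ?b' = "lam_max (Y ** matrix_inv X')"
  obtain u where u0: "u \<noteq> 0" and ub: "qf Y u = ?b * qf X u" using geneig_max[OF X Y] by blast
  have Xu: "qf X u > 0" and X'u: "qf X' u > 0" using spd_pos X X' u0 by auto
  have b: "?b = qf Y u / qf X u" using ub Xu by simp
  have "qf Y u \<le> ?b' * qf X' u" using geneig_max[OF X' Y] by blast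
  then have b': "qf Y u / qf X' u \<le> ?b'" using X'u by (simp add: divide_le_eq)
  have "\<bar>qf Y u / qf X u - qf Y u / qf X' u\<bar> \<le> Cy * (real CARD('n) * norm (X - X')) / c^2"
    apply (rule ratio_diff[where n="(norm u)^2"])
    using qX qX' qY c u0 spd_nonneg[OF Y] qf_diff_bound[where X=X and X'=X' and v=u] by (auto simp: qbnd_def)
  then show ?thesis using b b' by linarith
qed

lemma lam_min_lip:
  fixes X X' Y :: "real^'n::finite^'n"
  assumes X: "spd X" and X': "spd X'" and Y: "spd Y" and qX: "qbnd c C X" and qX': "qbnd c C' X'"
    and qY: "qbnd cy Cy Y" and c: "c > 0"
  shows "lam_min (Y ** matrix_inv X') - lam_min (Y ** matrix_inv X) \<le> Cy * (real CARD('n) * norm (X - X')) / c^2"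
proof -
  let ?a = "lam_min (Y ** matrix_inv X)" and ?a' = "lam_min (Y ** matrix_inv X')"
  obtain u where u0: "u \<noteq> 0" and ub: "qf Y u = ?a * qf X u" using geneig_min[OF X Y] by blast
  have Xu: "qf X u > 0" and X'u: "qf X' u > 0" using spd_pos X X' u0 by auto
  have a: "?a = qf Y u / qf X u" using ub Xu by simp
  have "?a' * qf X' u \<le> qf Y u" using geneig_min[OF X' Y] by blast
  then have a': "?a' \<le> qf Y u / qf X' u" using X'u by (simp add: le_divide_eq)
  have "\<bar>qf Y u / qf X u - qf Y u / qf X' u\<bar> \<le> Cy * (real CARD('n) * norm (X - X')) / c^2"
    apply (rule ratio_diff[where n="(norm u)^2"])
    using qX qX' qY c u0 spd_nonneg[OF Y] qf_diff_bound[where X=X and X'=X' and v=u] by (auto simp: qbnd_def)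
  then show ?thesis using a a' by linarith
qed

definition Mf :: "real \<Rightarrow> real \<Rightarrow> real" where
  "Mf a b = (if a = b then 1 / a else (ln b - ln a) / (b - a))"

lemma conv_ge:
  fixes A a b s :: real
  assumes "A \<le> a" "A \<le> b" "0 \<le> s" "s \<le> 1"
  shows "A \<le> (1 - s) * a + s * b"
proof -
  have "(1 - s) * a + s * b - A = (1 - s) * (a - A) + s * (b - A)" by (simp add: algebra_simps)
  moreover have "(1 - s) * (a - A) \<ge> 0" "s * (b - A) \<ge> 0" using assms by auto
  ultimately show ?thesis by linarith
qed

lemma g1:
  fixes a b s :: real
  shows "((\<lambda>s. (1 - s) * a + s * b) has_real_derivative (b - a)) (at s)"
  by (auto intro!: derivative_eq_intros)

lemma Mf_integral:
  assumes a: "a > 0" and b: "b > 0"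
  shows "((\<lambda>s. 1 / ((1 - s) * a + s * b)) has_integral Mf a b) {0..1::real}"
proof (cases "a = b")
  case True
  have "(\<lambda>s. 1 / ((1 - s) * a + s * b)) = (\<lambda>s. 1 / a)"
    using True by (auto simp: algebra_simps)
  moreover have "((\<lambda>s. 1 / a) has_integral (1 / a)) {0..1::real}"
    using has_integral_const_real[of "1/a" 0 "1::real"] by simp
  ultimately show ?thesis using True by (simp add: Mf_def)
next
  case False
  define m where "m = min a b"
  have m0: "m > 0" using a b by (simp add: m_def)
  define F where "F s = ln ((1 - s) * a + s * b) / (b - a)" for s
  have pos: "(1 - s) * a + s * b > 0" if "s \<in> {0..1}" for s
    using conv_ge[of m a b s] that m0 by (auto simp: m_def)
  have "(F has_vector_derivative (1 / ((1 - s) * a + s * b))) (at s within {0..1})" if "s \<in> {0..1}" for s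
  proof -
    have "(F has_real_derivative (1 / ((1 - s) * a + s * b)) * (b - a) / (b - a)) (at s)"
      unfolding F_def
      by (rule DERIV_cdivide, rule DERIV_chain2[OF DERIV_ln_divide[OF pos[OF that]] g1])
    then have "(F has_real_derivative (1 / ((1 - s) * a + s * b))) (at s)" using False by simp
    then show ?thesis
      by (simp add: has_real_derivative_iff_has_vector_derivative has_vector_derivative_at_within)
  qed
  from fundamental_theorem_of_calculus[OF _ this]
  have "((\<lambda>s. 1 / ((1 - s) * a + s * b)) has_integral F 1 - F 0) {0..1}" by simp
  moreover have "F 1 - F 0 = Mf a b" using False by (simp add: F_def Mf_def diff_divide_distrib)
  ultimately show ?thesis by simp
qed

lemma Mf_lip:
  assumes A: "A > 0" and "A \<le> a" "A \<le> b" "A \<le> a'" "A \<le> b'"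
  shows "\<bar>Mf a b - Mf a' b'\<bar> \<le> (\<bar>a - a'\<bar> + \<bar>b - b'\<bar>) / A^2"
proof -
  have I: "((\<lambda>s. 1 / ((1 - s) * a + s * b) - 1 / ((1 - s) * a' + s * b')) has_integral (Mf a b - Mf a' b')) {0..1::real}"
    by (rule has_integral_diff; rule Mf_integral) (use assms in auto)
  have "norm (Mf a b - Mf a' b') \<le> (\<bar>a - a'\<bar> + \<bar>b - b'\<bar>) / A^2 * Henstock_Kurzweil_Integration.content {0..1::real}"
  proof (rule has_integral_bound_real[OF _ _ I, where S="{}"])
    show "0 \<le> (\<bar>a - a'\<bar> + \<bar>b - b'\<bar>) / A^2" by simp
    show "finite {}" by simp
    fix s :: real assume s: "s \<in> {0..1} - {}"
    define p where "p = (1 - s) * a + s * b"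
    define p' where "p' = (1 - s) * a' + s * b'"
    have p: "A \<le> p" "A \<le> p'" using s assms conv_ge by (auto simp: p_def p'_def)
    have p0: "p > 0" "p' > 0" using p A by auto
    have "\<bar>p' - p\<bar> = \<bar>(1 - s) * (a' - a) + s * (b' - b)\<bar>" by (simp add: p_def p'_def algebra_simps)
    also have "\<dots> \<le> (1 - s) * \<bar>a' - a\<bar> + s * \<bar>b' - b\<bar>"
      using s by (auto intro!: order_trans[OF abs_triangle_ineq] simp: abs_mult)
    also have "\<dots> \<le> \<bar>a - a'\<bar> + \<bar>b - b'\<bar>"
      using s by (auto simp: abs_minus_commute intro!: add_mono mult_left_le_one_le)
    finally have num: "\<bar>p' - p\<bar> \<le> \<bar>a - a'\<bar> + \<bar>b - b'\<bar>" .
    have "norm (1 / p - 1 / p') = \<bar>p' - p\<bar> / (p * p')"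
      using p0 by (simp add: field_simps abs_divide)
    also have "\<dots> \<le> (\<bar>a - a'\<bar> + \<bar>b - b'\<bar>) / (A * A)"
      by (rule frac_le) (use num p p0 A in \<open>auto intro: mult_mono\<close>)
    finally show "norm (1 / ((1 - s) * a + s * b) - 1 / ((1 - s) * a' + s * b')) \<le> (\<bar>a - a'\<bar> + \<bar>b - b'\<bar>) / A^2"
      by (simp add: p_def p'_def power2_eq_square)
  qed
  then show ?thesis by simp
qed

lemma Mf_bound:
  assumes A: "A > 0" and "A \<le> a" "A \<le> b"
  shows "\<bar>Mf a b\<bar> \<le> 1 / A"
proof -
  have I: "((\<lambda>s. 1 / ((1 - s) * a + s * b)) has_integral (Mf a b)) {0..1::real}"
    by (rule Mf_integral) (use assms in auto)
  have "norm (Mf a b) \<le> 1 / A * Henstock_Kurzweil_Integration.content {0..1::real}"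
  proof (rule has_integral_bound_real[OF _ _ I, where S="{}"])
    show "0 \<le> 1 / A" using A by simp
    show "finite {}" by simp
    fix s :: real assume s: "s \<in> {0..1} - {}"
    have p: "A \<le> (1 - s) * a + s * b" using s assms conv_ge by auto
    then show "norm (1 / ((1 - s) * a + s * b)) \<le> 1 / A" using A
      by (simp add: frac_le)
  qed
  then show ?thesis by simp
qed

definition gg :: "real \<Rightarrow> real \<Rightarrow> real" where
  "gg t l = l powr t - 1 - t * ln l"
definition gd :: "real \<Rightarrow> real \<Rightarrow> real" where
  "gd t l = t * l powr (t - 1) - t / l"

lemma gg_deriv:
  assumes "l > 0"
  shows "(gg t has_real_derivative gd t l) (at l)"
proof -
  have "((\<lambda>l. l powr t - 1 - t * ln l) has_real_derivative (t * l powr (t - 1) - 0 - t * (1 / l))) (at l)"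
    by (intro derivative_intros DERIV_cmult has_real_derivative_powr DERIV_ln_divide assms)
  then show ?thesis by (simp add: gg_def[abs_def] gd_def)
qed

lemma psi_ident:
  fixes a b x y la lb t :: real
  assumes "b \<noteq> a"
  shows "(b * x - a * y) / (b - a) - 1 - t * (la - a * ((lb - la) / (b - a)))
       = (x - 1 - t * la) - a * (((y - 1 - t * lb) - (x - 1 - t * la)) / (b - a))"
proof -
  have d: "b - a \<noteq> 0" using assms by simp
  have h: "(b - a) * inverse (b - a) = 1" using d by simp
  show ?thesis unfolding divide_inverse using h by algebra
qed

lemma phi_ident:
  fixes a b x y la lb t :: real
  shows "(y - x) / (b - a) - t * ((lb - la) / (b - a))
       = ((y - 1 - t * lb) - (x - 1 - t * la)) / (b - a)"
  unfolding divide_inverse by algebra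

lemma rem_repr:
  assumes a: "0 < a" and ab: "a \<le> b"
  shows "\<exists>\<xi>. a \<le> \<xi> \<and> \<xi> \<le> b \<and> phi a b t - t * Mf a b = gd t \<xi> \<and>
            psi a b t - 1 - t * (ln a - a * Mf a b) = gg t a - a * gd t \<xi>"
proof (cases "a = b")
  case True
  have pa: "a powr (t - 1) = a powr t / a" using a by (simp add: powr_diff)
  have pa2: "a * a powr (t - 1) = a powr t" using a by (simp add: pa)
  show ?thesis
    apply (rule exI[of _ a])
    using True a pa2 by (simp add: phi_def psi_def Mf_def gg_def gd_def field_simps)
next
  case False
  then have lt: "a < b" using ab by simp
  obtain z where z: "a < z" "z < b" and mvt: "gg t b - gg t a = (b - a) * gd t z"
    using MVT2[OF lt, of "gg t" "gd t"] gg_deriv a by (metis less_le_trans)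
  have q: "(gg t b - gg t a) / (b - a) = gd t z" using mvt lt by simp
  have 1: "phi a b t - t * Mf a b = (gg t b - gg t a) / (b - a)"
    using lt phi_ident[of "b powr t" "a powr t" b a t "ln b" "ln a"] phi_ident[of "a powr t" "b powr t" b a t "ln a" "ln b"]
    by (simp add: phi_def Mf_def gg_def)
  have 2: "psi a b t - 1 - t * (ln a - a * Mf a b) = gg t a - a * ((gg t b - gg t a) / (b - a))"
    using lt psi_ident[of b a "a powr t" "b powr t" t "ln a" "ln b"] psi_ident[of a b "a powr t" "b powr t" "ln a" "ln b" t]
    by (simp add: psi_def Mf_def gg_def)
  show ?thesis using 1 2 q z by (intro exI[of _ z]) auto
qed

lemma exp_m1: fixes s :: real shows "\<bar>exp s - 1\<bar> \<le> \<bar>s\<bar> * exp \<bar>s\<bar>"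
proof -
  obtain u where u: "\<bar>u\<bar> \<le> \<bar>s\<bar>" and e: "exp s = (\<Sum>m<1. s ^ m / fact m) + exp u / fact 1 * s ^ 1"
    using Maclaurin_exp_le[of s 1] by blast
  have "\<bar>exp s - 1\<bar> = exp u * \<bar>s\<bar>" using e by (simp add: abs_mult)
  also have "\<dots> \<le> exp \<bar>s\<bar> * \<bar>s\<bar>" using u by (intro mult_right_mono) auto
  finally show ?thesis by (simp add: mult.commute)
qed

lemma exp_m2: fixes s :: real shows "\<bar>exp s - 1 - s\<bar> \<le> s^2 * exp \<bar>s\<bar>"
proof -
  obtain u where u: "\<bar>u\<bar> \<le> \<bar>s\<bar>" and e: "exp s = (\<Sum>m<2. s ^ m / fact m) + exp u / fact 2 * s ^ 2"
    using Maclaurin_exp_le[of s 2] by blast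
  have "\<bar>exp s - 1 - s\<bar> = exp u / 2 * s^2" using e by (simp add: abs_mult numeral_2_eq_2)
  also have "\<dots> \<le> exp \<bar>s\<bar> * s^2"
  proof (rule mult_right_mono)
    have "exp u \<le> exp \<bar>s\<bar>" using u by simp
    moreover have "exp u > 0" by simp
    ultimately show "exp u / 2 \<le> exp \<bar>s\<bar>" by linarith
  qed simp
  finally show ?thesis by (simp add: mult.commute)
qed

lemma g_bounds:
  assumes A: "0 < A" and l: "A \<le> l" "l \<le> B" and t: "0 \<le> t" "t \<le> 1"
  shows "\<bar>gd t l\<bar> \<le> t^2 * ((\<bar>ln A\<bar> + \<bar>ln B\<bar>) * exp (\<bar>ln A\<bar> + \<bar>ln B\<bar>) / A)"
    and "\<bar>gg t l\<bar> \<le> t^2 * ((\<bar>ln A\<bar> + \<bar>ln B\<bar>)^2 * exp (\<bar>ln A\<bar> + \<bar>ln B\<bar>))"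
proof -
  define L where "L = \<bar>ln A\<bar> + \<bar>ln B\<bar>"
  have l0: "l > 0" using A l by simp
  have "ln A \<le> ln l" "ln l \<le> ln B" using A l l0 by auto
  then have lnl: "\<bar>ln l\<bar> \<le> L" unfolding L_def by linarith
  define s where "s = t * ln l"
  have s: "\<bar>s\<bar> \<le> t * L" unfolding s_def using t lnl by (simp add: abs_mult mult_left_mono)
  have L0: "L \<ge> 0" by (simp add: L_def)
  have sL: "\<bar>s\<bar> \<le> L" using s t L0 by (meson mult_left_le_one_le order_trans)
  have ES: "exp \<bar>s\<bar> \<le> exp L" using sL by simp
  have lt: "l powr t = exp s" using l0 by (simp add: powr_def s_def)
  have "gd t l = (t / l) * (l powr t - 1)"
    using l0 by (simp add: gd_def powr_diff field_simps)
  then have "\<bar>gd t l\<bar> = (t / l) * \<bar>exp s - 1\<bar>" using t l0 lt by (simp add: abs_mult)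
  also have "\<dots> \<le> (t / A) * ((t * L) * exp L)"
  proof (rule mult_mono)
    show "t / l \<le> t / A" using t A l by (simp add: frac_le)
    show "\<bar>exp s - 1\<bar> \<le> t * L * exp L"
      using exp_m1[of s] s ES by (meson mult_mono abs_ge_zero exp_ge_zero order_trans)
  qed (use t A in auto)
  finally show "\<bar>gd t l\<bar> \<le> t^2 * ((\<bar>ln A\<bar> + \<bar>ln B\<bar>) * exp (\<bar>ln A\<bar> + \<bar>ln B\<bar>) / A)"
    by (simp add: L_def power2_eq_square field_simps)
  have "\<bar>gg t l\<bar> = \<bar>exp s - 1 - s\<bar>" using lt by (simp add: gg_def s_def)
  also have "\<dots> \<le> s^2 * exp \<bar>s\<bar>" by (rule exp_m2)
  also have "\<dots> \<le> (t * L)^2 * exp L"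
  proof (rule mult_mono)
    show "s^2 \<le> (t * L)^2" using s by (metis abs_ge_zero power2_abs power_mono)
  qed (use ES in auto)
  finally show "\<bar>gg t l\<bar> \<le> t^2 * ((\<bar>ln A\<bar> + \<bar>ln B\<bar>)^2 * exp (\<bar>ln A\<bar> + \<bar>ln B\<bar>))"
    by (simp add: L_def power_mult_distrib)
qed

definition Rc :: "real \<Rightarrow> real \<Rightarrow> real" where
  "Rc A B = (\<bar>ln A\<bar> + \<bar>ln B\<bar>) * exp (\<bar>ln A\<bar> + \<bar>ln B\<bar>) / A
          + (\<bar>ln A\<bar> + \<bar>ln B\<bar>)^2 * exp (\<bar>ln A\<bar> + \<bar>ln B\<bar>)
          + B * ((\<bar>ln A\<bar> + \<bar>ln B\<bar>) * exp (\<bar>ln A\<bar> + \<bar>ln B\<bar>) / A)"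

lemma Rc_nonneg: "0 < A \<Longrightarrow> 0 \<le> B \<Longrightarrow> 0 \<le> Rc A B"
  by (simp add: Rc_def)

lemma remainders:
  assumes A: "0 < A" and "A \<le> a" "a \<le> b" "b \<le> B" and t: "0 \<le> t" "t \<le> 1"
  shows "\<bar>phi a b t - t * Mf a b\<bar> \<le> Rc A B * t^2"
    and "\<bar>psi a b t - 1 - t * (ln a - a * Mf a b)\<bar> \<le> Rc A B * t^2"
proof -
  define P where "P = (\<bar>ln A\<bar> + \<bar>ln B\<bar>) * exp (\<bar>ln A\<bar> + \<bar>ln B\<bar>) / A"
  define Q where "Q = (\<bar>ln A\<bar> + \<bar>ln B\<bar>)^2 * exp (\<bar>ln A\<bar> + \<bar>ln B\<bar>)"
  have P0: "P \<ge> 0" and Q0: "Q \<ge> 0" using A by (auto simp: P_def Q_def)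
  have a0: "a > 0" using assms by simp
  have B0: "B > 0" using assms by simp
  obtain z where z: "a \<le> z" "z \<le> b" and e1: "phi a b t - t * Mf a b = gd t z"
     and e2: "psi a b t - 1 - t * (ln a - a * Mf a b) = gg t a - a * gd t z"
    using rem_repr[OF a0 assms(3)] by blast
  have gz: "\<bar>gd t z\<bar> \<le> t^2 * P" unfolding P_def
    by (rule g_bounds(1)) (use assms z in auto)
  have ga: "\<bar>gg t a\<bar> \<le> t^2 * Q" unfolding Q_def
    by (rule g_bounds(2)) (use assms in auto)
  have R: "Rc A B = P + Q + B * P" by (simp add: Rc_def P_def Q_def)
  have "\<bar>phi a b t - t * Mf a b\<bar> \<le> t^2 * P" using e1 gz by simp
  also have "\<dots> \<le> Rc A B * t^2" using R P0 Q0 B0 by (simp add: algebra_simps)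
  finally show "\<bar>phi a b t - t * Mf a b\<bar> \<le> Rc A B * t^2" .
  have "\<bar>gg t a - a * gd t z\<bar> \<le> \<bar>gg t a\<bar> + \<bar>a * gd t z\<bar>" by (rule abs_triangle_ineq4)
  moreover have "\<bar>a * gd t z\<bar> = a * \<bar>gd t z\<bar>" using a0 by (simp add: abs_mult)
  ultimately have "\<bar>gg t a - a * gd t z\<bar> \<le> \<bar>gg t a\<bar> + a * \<bar>gd t z\<bar>" by simp
  also have "\<dots> \<le> t^2 * Q + B * (t^2 * P)"
    using ga gz assms a0 by (intro add_mono mult_mono) auto
  also have "\<dots> \<le> Rc A B * t^2" using R P0 Q0 B0 by (simp add: algebra_simps)
  finally show "\<bar>psi a b t - 1 - t * (ln a - a * Mf a b)\<bar> \<le> Rc A B * t^2" using e2 by simp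
qed

lemma lincomb:
  fixes Y Z :: "'a::real_vector"
  shows "(p *\<^sub>R Y + q *\<^sub>R Z) - Z - t *\<^sub>R (m *\<^sub>R Y + w *\<^sub>R Z) = (p - t*m) *\<^sub>R Y + (q - 1 - t*w) *\<^sub>R Z"
  by (simp add: algebra_simps)

lemma powr_lo:
  fixes a t :: real
  assumes "0 < a" "0 \<le> t" "t \<le> 1"
  shows "min 1 a \<le> a powr t"
proof (cases "a \<ge> 1")
  case True then show ?thesis using ge_one_powr_ge_zero assms by simp
next
  case False
  then have "a powr 1 \<le> a powr t" using assms by (intro powr_mono') auto
  then show ?thesis using assms by simp
qed

lemma powr_hi:
  fixes b t :: real
  assumes "0 < b" "0 \<le> t" "t \<le> 1"
  shows "b powr t \<le> max 1 b"
proof (cases "b \<le> 1")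
  case True
  then have "b powr t \<le> b powr 0" using assms by (intro powr_mono') auto
  then show ?thesis using assms by simp
next
  case False
  then have "b powr t \<le> b powr 1" using assms by (intro powr_mono) auto
  then show ?thesis using assms by simp
qed

lemma chord:
  fixes a b t y z :: real
  assumes a: "0 < a" "a \<le> b" and t: "0 \<le> t" "t \<le> 1" and z: "0 \<le> z"
    and y: "a * z \<le> y" "y \<le> b * z"
  shows "z * a powr t \<le> phi a b t * y + psi a b t * z \<and> phi a b t * y + psi a b t * z \<le> z * b powr t"
proof (cases "a = b")
  case True
  then have yz: "y = a * z" using y by simp
  have pa: "a * a powr (t - 1) = a powr t" using a by (simp add: powr_diff)
  have "phi a b t * y + psi a b t * z = z * a powr t"
    using True yz pa by (simp add: phi_def psi_def algebra_simps)
  then show ?thesis using True by simp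
next
  case False
  then have lt: "a < b" using a by simp
  have phi0: "phi a b t \<ge> 0"
    using lt a t by (simp add: phi_def powr_mono2 divide_nonneg_pos)
  have h: "(b - a) * inverse (b - a) = 1" using lt by simp
  have ph: "phi a b t = (b powr t - a powr t) * inverse (b - a)" using lt by (simp add: phi_def divide_inverse)
  have ps: "psi a b t = (b * a powr t - a * b powr t) * inverse (b - a)" using lt by (simp add: psi_def divide_inverse)
  have ea: "phi a b t * a + psi a b t = a powr t"
    unfolding ph ps using h by algebra
  have eb: "phi a b t * b + psi a b t = b powr t"
    unfolding ph ps using h by algebra
  have 1: "phi a b t * y + psi a b t * z - z * a powr t = phi a b t * (y - a * z)"
    using ea by (simp add: algebra_simps) (metis distrib_left mult.assoc mult.commute)
  have 2: "z * b powr t - (phi a b t * y + psi a b t * z) = phi a b t * (b * z - y)"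
    using eb by (simp add: algebra_simps) (metis distrib_left mult.assoc mult.commute)
  have "phi a b t * (y - a * z) \<ge> 0" "phi a b t * (b * z - y) \<ge> 0" using phi0 y by auto
  then show ?thesis using 1 2 by linarith
qed

lemma qbnd_le:
  fixes Z :: "real^'n::finite^'n"
  assumes "qbnd c C Z" shows "c \<le> C"
proof -
  obtain i :: 'n where True by simp
  have "c * (norm (axis i (1::real)))^2 \<le> C * (norm (axis i (1::real)))^2"
    using assms unfolding qbnd_def by (meson order_trans)
  then show ?thesis by (simp add: norm_axis_1)
qed

lemma qbnd_mono: "qbnd c C Z \<Longrightarrow> c' \<le> c \<Longrightarrow> C \<le> C' \<Longrightarrow> qbnd c' C' Z"
  unfolding qbnd_def by (meson mult_right_mono order_trans zero_le_power2)

lemma lam_pos: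
  fixes Y Z :: "real^'n::finite^'n"
  assumes Z: "spd Z" and Y: "spd Y"
  shows "0 < lam_min (Y ** matrix_inv Z) \<and> lam_min (Y ** matrix_inv Z) \<le> lam_max (Y ** matrix_inv Z)"
proof -
  let ?a = "lam_min (Y ** matrix_inv Z)" and ?b = "lam_max (Y ** matrix_inv Z)"
  obtain u where u0: "u \<noteq> 0" and ua: "qf Y u = ?a * qf Z u" using geneig_min[OF Z Y] by blast
  have Zu: "qf Z u > 0" using spd_pos[OF Z u0] .
  have "?a * qf Z u > 0" using ua spd_pos[OF Y u0] by simp
  then have a0: "?a > 0" using Zu by (simp add: zero_less_mult_iff)
  have "?a * qf Z u \<le> ?b * qf Z u" using geneig_max[OF Z Y] ua by metis
  then show ?thesis using Zu a0 by simp
qed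

definition Fj :: "real^'n::finite^'n \<Rightarrow> real^'n^'n \<Rightarrow> real^'n^'n" where
  "Fj Y Z = m_coef Y Z *\<^sub>R Y + o_coef Y Z *\<^sub>R Z"

lemma coef_eq:
  fixes Y Z :: "real^'n::finite^'n"
  assumes Z: "spd Z" and Y: "spd Y"
  shows "m_coef Y Z = Mf (lam_min (Y ** matrix_inv Z)) (lam_max (Y ** matrix_inv Z))"
    and "o_coef Y Z = ln (lam_min (Y ** matrix_inv Z)) - lam_min (Y ** matrix_inv Z) * Mf (lam_min (Y ** matrix_inv Z)) (lam_max (Y ** matrix_inv Z))"
proof -
  let ?a = "lam_min (Y ** matrix_inv Z)" and ?b = "lam_max (Y ** matrix_inv Z)"
  have ab: "0 < ?a" "?a \<le> ?b" using lam_pos[OF Z Y] by auto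
  show "m_coef Y Z = Mf ?a ?b"
    using ab by (auto simp: m_coef_def Mf_def Let_def)
  show "o_coef Y Z = ln ?a - ?a * Mf ?a ?b"
  proof (cases "?a = ?b")
    case True then show ?thesis using ab by (simp add: o_coef_def Mf_def Let_def)
  next
    case False
    then have lt: "?a < ?b" using ab by simp
    have h: "(?b - ?a) * inverse (?b - ?a) = 1" using lt by simp
    have "o_coef Y Z = (?b * ln ?a - ?a * ln ?b) * inverse (?b - ?a)"
      using lt by (simp add: o_coef_def Let_def divide_inverse)
    moreover have "Mf ?a ?b = (ln ?b - ln ?a) * inverse (?b - ?a)"
      using False by (simp add: Mf_def divide_inverse)
    ultimately show ?thesis using h by algebra
  qed
qed

lemma step:
  fixes Y Z :: "real^'n::finite^'n"
  assumes Z: "spd Z" and Y: "spd Y" and qZ: "qbnd c C Z" and qY: "qbnd cy Cy Y"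
    and c: "c > 0" and cy: "cy > 0" and t: "0 \<le> t" "t \<le> 1"
    and A: "A > 0" "A \<le> cy / C" and B: "Cy / c \<le> B"
  shows "spd (thompson_geo Z t Y)"
    and "qbnd (c * min 1 (cy / C)) (C * max 1 (Cy / c)) (thompson_geo Z t Y)"
    and "norm (thompson_geo Z t Y - Z - t *\<^sub>R Fj Y Z) \<le> Rc A B * t^2 * (norm Y + norm Z)"
proof -
  let ?a = "lam_min (Y ** matrix_inv Z)" and ?b = "lam_max (Y ** matrix_inv Z)"
  have lb: "cy / C \<le> ?a \<and> ?a \<le> ?b \<and> ?b \<le> Cy / c" by (rule lam_bounds[OF Z Y qZ qY c cy])
  have a0: "0 < ?a" using lam_pos[OF Z Y] by auto
  have C0: "C > 0" using qbnd_le[OF qZ] c by simp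
  define Z' where "Z' = thompson_geo Z t Y"
  have Z'eq: "Z' = phi ?a ?b t *\<^sub>R Y + psi ?a ?b t *\<^sub>R Z"
    by (simp add: Z'_def thompson_geo_def Let_def)
  have qZ': "qf Z' v = phi ?a ?b t * qf Y v + psi ?a ?b t * qf Z v" for v
    by (simp add: Z'eq qf_add qf_scale)
  have qb: "qf Z v * min 1 ?a \<le> qf Z' v \<and> qf Z' v \<le> qf Z v * max 1 ?b" for v
  proof -
    have z0: "qf Z v \<ge> 0" by (rule spd_nonneg[OF Z])
    have "?a * qf Z v \<le> qf Y v" "qf Y v \<le> ?b * qf Z v"
      using geneig_min[OF Z Y] geneig_max[OF Z Y] by auto
    from chord[OF a0 _ t z0 this] lb
    have ch: "qf Z v * ?a powr t \<le> qf Z' v \<and> qf Z' v \<le> qf Z v * ?b powr t"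
      by (simp add: qZ')
    have "qf Z v * min 1 ?a \<le> qf Z v * ?a powr t"
      using powr_lo[OF a0 t] z0 by (rule mult_left_mono)
    moreover have "qf Z v * ?b powr t \<le> qf Z v * max 1 ?b"
      using powr_hi[of ?b t] a0 lb t z0 by (intro mult_left_mono) auto
    ultimately show ?thesis using ch by linarith
  qed
  have mins: "min 1 (cy / C) \<le> min 1 ?a" using lb by auto
  have maxs: "max 1 ?b \<le> max 1 (Cy / c)" using lb by auto
  have mpos: "min 1 (cy / C) > 0" using cy C0 by simp
  show qbZ': "qbnd (c * min 1 (cy / C)) (C * max 1 (Cy / c)) (thompson_geo Z t Y)"
    unfolding qbnd_def Z'_def[symmetric]
  proof
    fix v
    have z: "c * (norm v)^2 \<le> qf Z v" "qf Z v \<le> C * (norm v)^2" using qZ by (auto simp: qbnd_def)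
    have "c * min 1 (cy / C) * (norm v)^2 = (c * (norm v)^2) * min 1 (cy / C)" by simp
    also have "\<dots> \<le> qf Z v * min 1 ?a"
      using z mins mpos c spd_nonneg[OF Z, of v] by (intro mult_mono) auto
    also have "\<dots> \<le> qf Z' v" using qb by blast
    finally have 1: "c * min 1 (cy / C) * (norm v)^2 \<le> qf Z' v" .
    have "qf Z' v \<le> qf Z v * max 1 ?b" using qb by blast
    also have "\<dots> \<le> (C * (norm v)^2) * max 1 (Cy / c)"
      using z maxs spd_nonneg[OF Z, of v] by (intro mult_mono) auto
    finally have 2: "qf Z' v \<le> C * max 1 (Cy / c) * (norm v)^2" using mult.commute mult.assoc by metis
    show "c * min 1 (cy / C) * (norm v)\<^sup>2 \<le> qf Z' v \<and> qf Z' v \<le> C * max 1 (Cy / c) * (norm v)\<^sup>2"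
      using 1 2 by simp
  qed
  show "spd (thompson_geo Z t Y)"
    unfolding spd_def Z'_def[symmetric]
  proof
    have "transpose Y = Y" "transpose Z = Z" using Y Z by (auto simp: spd_def)
    then show "transpose Z' = Z'"
      by (simp add: Z'eq transpose_scalar transpose_def vec_eq_iff)
  next
    show "\<forall>x. x \<noteq> 0 \<longrightarrow> 0 < x \<bullet> (Z' *v x)"
    proof (intro allI impI)
      fix x :: "real^'n" assume "x \<noteq> 0"
      then have "0 < c * min 1 (cy / C) * (norm x)^2" using c mpos by simp
      also have "\<dots> \<le> qf Z' x" using qbZ' by (simp add: qbnd_def Z'_def)
      finally show "0 < x \<bullet> (Z' *v x)" by (simp add: qf_def)
    qed
  qed
  have A1: "A \<le> ?a" using A lb by linarith
  have B1: "?b \<le> B" using B lb by linarith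
  have r1: "\<bar>phi ?a ?b t - t * Mf ?a ?b\<bar> \<le> Rc A B * t^2"
    and r2: "\<bar>psi ?a ?b t - 1 - t * (ln ?a - ?a * Mf ?a ?b)\<bar> \<le> Rc A B * t^2"
    using remainders[OF A(1) A1 _ B1 t] lb by blast+
  define p1 where "p1 = phi ?a ?b t - t * Mf ?a ?b"
  define p2 where "p2 = psi ?a ?b t - 1 - t * (ln ?a - ?a * Mf ?a ?b)"
  have eq: "thompson_geo Z t Y - Z - t *\<^sub>R Fj Y Z = p1 *\<^sub>R Y + p2 *\<^sub>R Z"
    unfolding Z'_def[symmetric] Z'eq Fj_def coef_eq[OF Z Y] p1_def p2_def by (rule lincomb)
  have "norm (p1 *\<^sub>R Y + p2 *\<^sub>R Z) \<le> norm (p1 *\<^sub>R Y) + norm (p2 *\<^sub>R Z)"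
    by (rule norm_triangle_ineq)
  also have "\<dots> = \<bar>p1\<bar> * norm Y + \<bar>p2\<bar> * norm Z" by simp
  also have "\<dots> \<le> Rc A B * t^2 * norm Y + Rc A B * t^2 * norm Z"
    using r1 r2 unfolding p1_def[symmetric] p2_def[symmetric]
    by (intro add_mono mult_right_mono) auto
  also have "\<dots> = Rc A B * t^2 * (norm Y + norm Z)" by (simp add: distrib_left)
  finally show "norm (thompson_geo Z t Y - Z - t *\<^sub>R Fj Y Z) \<le> Rc A B * t^2 * (norm Y + norm Z)"
    unfolding eq .
qed

lemma ln_lip:
  fixes x y A :: real
  assumes "0 < A" "A \<le> x" "A \<le> y"
  shows "\<bar>ln x - ln y\<bar> \<le> \<bar>x - y\<bar> / A"
proof -
  have x0: "x > 0" and y0: "y > 0" using assms by auto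
  have 1: "ln x - ln y \<le> (x - y) / y"
    using ln_le_minus_one[of "x / y"] x0 y0 by (simp add: ln_div diff_divide_distrib)
  have 2: "ln y - ln x \<le> (y - x) / x"
    using ln_le_minus_one[of "y / x"] x0 y0 by (simp add: ln_div diff_divide_distrib)
  have 3: "\<bar>x - y\<bar> / y \<le> \<bar>x - y\<bar> / A" "\<bar>x - y\<bar> / x \<le> \<bar>x - y\<bar> / A"
    using assms by (auto intro!: divide_left_mono)
  have "(x - y) / y \<le> \<bar>x - y\<bar> / y" "(y - x) / x \<le> \<bar>x - y\<bar> / x"
    using x0 y0 by (auto intro!: divide_right_mono)
  then show ?thesis using 1 2 3 by linarith
qed

definition Lc :: "real \<Rightarrow> real \<Rightarrow> real" where
  "Lc A B = \<bar>ln A\<bar> + \<bar>ln B\<bar> + B / A"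

lemma coef_bounds:
  fixes Y Z :: "real^'n::finite^'n"
  assumes Z: "spd Z" and Y: "spd Y" and qZ: "qbnd c C Z" and qY: "qbnd cy Cy Y"
    and c: "c > 0" and cy: "cy > 0" and A: "A > 0" "A \<le> cy / C" and B: "Cy / c \<le> B"
  shows "A \<le> lam_min (Y ** matrix_inv Z)" "lam_min (Y ** matrix_inv Z) \<le> lam_max (Y ** matrix_inv Z)"
        "lam_max (Y ** matrix_inv Z) \<le> B"
        "\<bar>m_coef Y Z\<bar> \<le> 1 / A" "\<bar>o_coef Y Z\<bar> \<le> Lc A B"
proof -
  let ?a = "lam_min (Y ** matrix_inv Z)" and ?b = "lam_max (Y ** matrix_inv Z)"
  have lb: "cy / C \<le> ?a \<and> ?a \<le> ?b \<and> ?b \<le> Cy / c" by (rule lam_bounds[OF Z Y qZ qY c cy])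
  show A1: "A \<le> ?a" using A lb by linarith
  show ab: "?a \<le> ?b" using lb by simp
  show B1: "?b \<le> B" using B lb by linarith
  have M: "\<bar>Mf ?a ?b\<bar> \<le> 1 / A" using Mf_bound[OF A(1) A1] A1 ab by simp
  then show "\<bar>m_coef Y Z\<bar> \<le> 1 / A" by (simp add: coef_eq[OF Z Y])
  have "ln A \<le> ln ?a" "ln ?a \<le> ln B" using A A1 ab B1 by auto
  then have la: "\<bar>ln ?a\<bar> \<le> \<bar>ln A\<bar> + \<bar>ln B\<bar>" by linarith
  have "\<bar>?a * Mf ?a ?b\<bar> \<le> B * (1 / A)"
    unfolding abs_mult using M A A1 ab B1 by (intro mult_mono) auto
  moreover have "\<bar>ln ?a - ?a * Mf ?a ?b\<bar> \<le> \<bar>ln ?a\<bar> + \<bar>?a * Mf ?a ?b\<bar>" by (rule abs_triangle_ineq4)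
  moreover have "B * (1 / A) = B / A" by simp
  ultimately have "\<bar>ln ?a - ?a * Mf ?a ?b\<bar> \<le> Lc A B"
    using la unfolding Lc_def by linarith
  then show "\<bar>o_coef Y Z\<bar> \<le> Lc A B" by (simp add: coef_eq[OF Z Y])
qed

lemma Fj_bound:
  fixes Y Z :: "real^'n::finite^'n"
  assumes Z: "spd Z" and Y: "spd Y" and qZ: "qbnd c C Z" and qY: "qbnd cy Cy Y"
    and c: "c > 0" and cy: "cy > 0" and A: "A > 0" "A \<le> cy / C" and B: "Cy / c \<le> B"
  shows "norm (Fj Y Z) \<le> norm Y / A + Lc A B * norm Z"
proof -
  note cb = coef_bounds[OF assms]
  have "norm (Fj Y Z) \<le> \<bar>m_coef Y Z\<bar> * norm Y + \<bar>o_coef Y Z\<bar> * norm Z"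
    unfolding Fj_def by (rule order_trans[OF norm_triangle_ineq]) simp
  also have "\<dots> \<le> 1 / A * norm Y + Lc A B * norm Z"
    using cb by (intro add_mono mult_right_mono) auto
  finally show ?thesis by simp
qed

lemma Fj_lip:
  fixes Y Z Z' :: "real^'n::finite^'n"
  assumes Z: "spd Z" and Z': "spd Z'" and Y: "spd Y" and qZ: "qbnd c C Z" and qZ': "qbnd c C Z'"
    and qY: "qbnd cy Cy Y"
    and c: "c > 0" and cy: "cy > 0" and A: "A > 0" "A \<le> cy / C" and B: "Cy / c \<le> B"
    and N: "norm Z \<le> N"
  shows "norm (Fj Y Z - Fj Y Z') \<le>
    (2 * (Cy * real CARD('n) / c^2) / A^2 * norm Y
     + (2 * (Cy * real CARD('n) / c^2) / A + 2 * B * (Cy * real CARD('n) / c^2) / A^2) * N + Lc A B) * norm (Z - Z')"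
proof -
  define Ka where "Ka = Cy * real CARD('n) / c^2"
  define d where "d = norm (Z - Z')"
  have d0: "d \<ge> 0" by (simp add: d_def)
  have Ka0: "Ka \<ge> 0" using qbnd_le[OF qY] cy by (simp add: Ka_def)
  let ?a = "lam_min (Y ** matrix_inv Z)" and ?b = "lam_max (Y ** matrix_inv Z)"
  let ?a' = "lam_min (Y ** matrix_inv Z')" and ?b' = "lam_max (Y ** matrix_inv Z')"
  note cb = coef_bounds[OF Z Y qZ qY c cy A B]
  note cb' = coef_bounds[OF Z' Y qZ' qY c cy A B]
  have nd: "norm (Z' - Z) = d" by (simp add: d_def norm_minus_commute)
  have "?a' - ?a \<le> Ka * d"
    using lam_min_lip[OF Z Z' Y qZ qZ' qY c] by (simp add: Ka_def d_def)
  moreover have "?a - ?a' \<le> Ka * d"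
    using lam_min_lip[OF Z' Z Y qZ' qZ qY c] nd by (simp add: Ka_def)
  ultimately have da: "\<bar>?a - ?a'\<bar> \<le> Ka * d" by linarith
  have "?b - ?b' \<le> Ka * d"
    using lam_max_lip[OF Z Z' Y qZ qZ' qY c] by (simp add: Ka_def d_def)
  moreover have "?b' - ?b \<le> Ka * d"
    using lam_max_lip[OF Z' Z Y qZ' qZ qY c] nd by (simp add: Ka_def)
  ultimately have db: "\<bar>?b - ?b'\<bar> \<le> Ka * d" by linarith
  define M where "M = Mf ?a ?b"
  define M' where "M' = Mf ?a' ?b'"
  have mM: "m_coef Y Z = M" "m_coef Y Z' = M'" using coef_eq[OF Z Y] coef_eq[OF Z' Y] by (simp_all add: M_def M'_def)
  have oM: "o_coef Y Z = ln ?a - ?a * M" "o_coef Y Z' = ln ?a' - ?a' * M'"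
    using coef_eq[OF Z Y] coef_eq[OF Z' Y] by (simp_all add: M_def M'_def)
  have dM: "\<bar>M - M'\<bar> \<le> 2 * Ka * d / A^2"
  proof -
    have "\<bar>M - M'\<bar> \<le> (\<bar>?a - ?a'\<bar> + \<bar>?b - ?b'\<bar>) / A^2"
      unfolding M_def M'_def by (rule Mf_lip) (use A cb cb' in auto)
    also have "\<dots> \<le> (Ka * d + Ka * d) / A^2"
      using da db by (intro divide_right_mono add_mono) auto
    finally show ?thesis by simp
  qed
  have Mb: "\<bar>M\<bar> \<le> 1 / A" using cb mM by simp
  have do: "\<bar>o_coef Y Z - o_coef Y Z'\<bar> \<le> (2 * Ka / A + 2 * B * Ka / A^2) * d"
  proof -
    have "o_coef Y Z - o_coef Y Z' = (ln ?a - ln ?a') - ((?a - ?a') * M + ?a' * (M - M'))"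
      unfolding oM by (simp add: algebra_simps)
    moreover have "\<bar>(ln ?a - ln ?a') - ((?a - ?a') * M + ?a' * (M - M'))\<bar> \<le> \<bar>ln ?a - ln ?a'\<bar> + (\<bar>(?a - ?a') * M\<bar> + \<bar>?a' * (M - M')\<bar>)"
      using abs_triangle_ineq4[of "ln ?a - ln ?a'" "(?a - ?a') * M + ?a' * (M - M')"]
        abs_triangle_ineq[of "(?a - ?a') * M" "?a' * (M - M')"] by linarith
    ultimately have "\<bar>o_coef Y Z - o_coef Y Z'\<bar> \<le> \<bar>ln ?a - ln ?a'\<bar> + (\<bar>?a - ?a'\<bar> * \<bar>M\<bar> + \<bar>?a'\<bar> * \<bar>M - M'\<bar>)"
      by (simp add: abs_mult)
    also have "\<dots> \<le> Ka * d / A + (Ka * d * (1 / A) + B * (2 * Ka * d / A^2))"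
    proof (intro add_mono mult_mono)
      show "\<bar>ln ?a - ln ?a'\<bar> \<le> Ka * d / A"
      proof -
        have "\<bar>ln ?a - ln ?a'\<bar> \<le> \<bar>?a - ?a'\<bar> / A" using ln_lip[of A ?a ?a'] A cb cb' by simp
        also have "\<dots> \<le> Ka * d / A" using da A by (simp add: divide_right_mono)
        finally show ?thesis .
      qed
      show "\<bar>?a'\<bar> \<le> B" using cb' A by auto
    qed (use da Mb dM Ka0 d0 A cb in auto)
    also have "\<dots> = (2 * Ka / A + 2 * B * Ka / A^2) * d" by (simp add: field_simps power2_eq_square)
    finally show ?thesis .
  qed
  have ob: "\<bar>o_coef Y Z'\<bar> \<le> Lc A B" using cb' by simp
  have "Fj Y Z - Fj Y Z' = (M - M') *\<^sub>R Y + (o_coef Y Z - o_coef Y Z') *\<^sub>R Z + o_coef Y Z' *\<^sub>R (Z - Z')"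
    unfolding Fj_def mM by (simp add: algebra_simps)
  then have "norm (Fj Y Z - Fj Y Z') \<le> \<bar>M - M'\<bar> * norm Y + \<bar>o_coef Y Z - o_coef Y Z'\<bar> * norm Z + \<bar>o_coef Y Z'\<bar> * d"
  proof -
    have t3: "norm (x + y + z) \<le> norm x + norm y + norm z" for x y z :: "real^'n^'n"
      using norm_triangle_ineq[of x y] norm_triangle_ineq[of "x+y" z] by linarith
    show ?thesis unfolding \<open>Fj Y Z - Fj Y Z' = _\<close> d_def
      using t3[of "(M - M') *\<^sub>R Y" "(o_coef Y Z - o_coef Y Z') *\<^sub>R Z" "o_coef Y Z' *\<^sub>R (Z - Z')"]
      by simp
  qed
  also have "\<dots> \<le> (2 * Ka * d / A^2) * norm Y + ((2 * Ka / A + 2 * B * Ka / A^2) * d) * N + Lc A B * d"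
    using dM do ob N d0 by (intro add_mono mult_mono) auto
  also have "\<dots> = (2 * Ka / A^2 * norm Y + (2 * Ka / A + 2 * B * Ka / A^2) * N + Lc A B) * d"
    by (simp add: algebra_simps)
  finally show ?thesis by (simp add: Ka_def d_def)
qed

lemma qf_expand:
  fixes X :: "real^'n::finite^'n"
  shows "qf X v = (\<Sum>i\<in>UNIV. v $ i * (\<Sum>j\<in>UNIV. X $ i $ j * v $ j))"
  by (simp add: qf_def inner_vec_def matrix_vector_mult_def)

lemma qf_normalize:
  fixes X :: "real^'n::finite^'n"
  assumes "v \<noteq> 0"
  shows "qf X v = (norm v)^2 * qf X ((1 / norm v) *\<^sub>R v)"
  using assms by (simp add: qf_scalev field_simps)

lemma compact_lower:
  fixes KK :: "(real^'n::finite^'n) set"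
  assumes "compact KK" "KK \<noteq> {}" "KK \<subseteq> {A. spd A}"
  shows "\<exists>c>0. \<forall>X\<in>KK. \<forall>v. c * (norm v)^2 \<le> qf X v"
proof -
  let ?S = "{v::real^'n. norm v = 1}"
  have cpt: "compact (KK \<times> ?S)" using assms(1) sphere_compact by (rule compact_Times)
  have ne: "KK \<times> ?S \<noteq> {}" using assms(2) sphere_ne by auto
  have cont: "continuous_on (KK \<times> ?S) (\<lambda>p. \<Sum>i\<in>UNIV. snd p $ i * (\<Sum>j\<in>UNIV. fst p $ i $ j * snd p $ j))"
    by (intro continuous_intros)
  obtain p0 where p0: "p0 \<in> KK \<times> ?S"
    and pmin: "\<And>p. p \<in> KK \<times> ?S \<Longrightarrow> (\<Sum>i\<in>UNIV. snd p0 $ i * (\<Sum>j\<in>UNIV. fst p0 $ i $ j * snd p0 $ j))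
        \<le> (\<Sum>i\<in>UNIV. snd p $ i * (\<Sum>j\<in>UNIV. fst p $ i $ j * snd p $ j))"
    using continuous_attains_inf[OF cpt ne cont] by blast
  define c where "c = qf (fst p0) (snd p0)"
  have "spd (fst p0)" "snd p0 \<noteq> 0" using p0 assms(3) by auto
  then have c0: "c > 0" unfolding c_def by (rule spd_pos)
  have le: "c \<le> qf X u" if "X \<in> KK" "norm u = 1" for X u
    using pmin[of "(X, u)"] that unfolding c_def qf_expand by auto
  have "c * (norm v)^2 \<le> qf X v" if "X \<in> KK" for X v
  proof (cases "v = 0")
    case True then show ?thesis by (simp add: qf_def)
  next
    case False
    have "c \<le> qf X ((1 / norm v) *\<^sub>R v)" using le[OF that] False by simp
    then have "(norm v)^2 * c \<le> (norm v)^2 * qf X ((1 / norm v) *\<^sub>R v)"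
      by (rule mult_left_mono) simp
    then show ?thesis using qf_normalize[OF False, of X] by (simp add: mult.commute)
  qed
  then show ?thesis using c0 by blast
qed

lemma qf_upper:
  fixes X :: "real^'n::finite^'n"
  assumes "norm X \<le> R"
  shows "qf X v \<le> real CARD('n) * R * (norm v)^2"
proof -
  have "qf X v \<le> real CARD('n) * norm X * (norm v)^2" using qf_bound[of X v] by simp
  also have "\<dots> \<le> real CARD('n) * R * (norm v)^2" using assms by (intro mult_right_mono mult_left_mono) auto
  finally show ?thesis .
qed

lemma spd_lower:
  fixes Y :: "real^'n::finite^'n"
  assumes "spd Y"
  shows "\<exists>c>0. \<forall>v. c * (norm v)^2 \<le> qf Y v"
  using compact_lower[of "{Y}"] assms by auto

primrec cseq :: "real \<Rightarrow> real \<Rightarrow> real \<Rightarrow> real \<Rightarrow> nat \<Rightarrow> real \<times> real" where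
  "cseq c0 C0 cy Cy 0 = (c0, C0)"
| "cseq c0 C0 cy Cy (Suc l) = (fst (cseq c0 C0 cy Cy l) * min 1 (cy / snd (cseq c0 C0 cy Cy l)),
                               snd (cseq c0 C0 cy Cy l) * max 1 (Cy / fst (cseq c0 C0 cy Cy l)))"

lemma cseq_pos:
  assumes "c0 > 0" "C0 > 0" "cy > 0" "Cy > 0"
  shows "fst (cseq c0 C0 cy Cy l) > 0 \<and> snd (cseq c0 C0 cy Cy l) > 0"
  by (induction l) (use assms in auto)

lemma cseq_mono:
  assumes "c0 > 0" "C0 > 0" "cy > 0" "Cy > 0" "l \<le> m"
  shows "fst (cseq c0 C0 cy Cy m) \<le> fst (cseq c0 C0 cy Cy l)"
    and "snd (cseq c0 C0 cy Cy l) \<le> snd (cseq c0 C0 cy Cy m)"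
proof -
  have dec: "decseq (\<lambda>l. fst (cseq c0 C0 cy Cy l))"
  proof (rule decseq_SucI)
    fix n
    have p: "fst (cseq c0 C0 cy Cy n) > 0" using cseq_pos[OF assms(1-4)] by blast
    have "min 1 (cy / snd (cseq c0 C0 cy Cy n)) \<le> 1" by simp
    then show "fst (cseq c0 C0 cy Cy (Suc n)) \<le> fst (cseq c0 C0 cy Cy n)"
      using p by (simp add: mult_left_le)
  qed
  show "fst (cseq c0 C0 cy Cy m) \<le> fst (cseq c0 C0 cy Cy l)" using antimonoD[OF dec assms(5)] by simp
  have inc: "incseq (\<lambda>l. snd (cseq c0 C0 cy Cy l))"
  proof (rule incseq_SucI)
    fix n
    have p: "snd (cseq c0 C0 cy Cy n) > 0" using cseq_pos[OF assms(1-4)] by blast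
    have "1 \<le> max 1 (Cy / fst (cseq c0 C0 cy Cy n))" by simp
    then show "snd (cseq c0 C0 cy Cy n) \<le> snd (cseq c0 C0 cy Cy (Suc n))"
      using p by (simp add: mult_le_cancel_left1)
  qed
  show "snd (cseq c0 C0 cy Cy l) \<le> snd (cseq c0 C0 cy Cy m)" using monoD[OF inc assms(5)] by simp
qed

primrec nseq :: "real \<Rightarrow> real \<Rightarrow> real \<Rightarrow> nat \<Rightarrow> real" where
  "nseq R al be 0 = R"
| "nseq R al be (Suc l) = al + (1 + be) * nseq R al be l"

lemma nseq_mono:
  assumes "R \<ge> 0" "al \<ge> 0" "be \<ge> 0" "l \<le> m"
  shows "nseq R al be l \<le> nseq R al be m" "0 \<le> nseq R al be l"
proof -
  have nn: "0 \<le> nseq R al be n" for n by (induction n) (use assms in auto)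
  have inc: "incseq (nseq R al be)"
  proof (rule incseq_SucI)
    fix n show "nseq R al be n \<le> nseq R al be (Suc n)"
      using nn[of n] assms by (simp add: algebra_simps)
  qed
  show "nseq R al be l \<le> nseq R al be m" using monoD[OF inc assms(4)] by simp
  show "0 \<le> nseq R al be l" by (rule nn)
qed

lemma telescope_bound:
  fixes x :: "nat \<Rightarrow> 'a::real_normed_vector" and G :: "nat \<Rightarrow> 'a"
  assumes "\<And>l. l < k \<Longrightarrow> norm (x (Suc l) - x l - t l *\<^sub>R G l) \<le> r"
  shows "norm (x k - x 0 - (\<Sum>l<k. t l *\<^sub>R G l)) \<le> real k * r"
proof -
  have "(\<Sum>l<k. x (Suc l) - x l - t l *\<^sub>R G l) = (\<Sum>l<k. x (Suc l) - x l) - (\<Sum>l<k. t l *\<^sub>R G l)"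
    by (rule sum_subtractf)
  also have "(\<Sum>l<k. x (Suc l) - x l) = x k - x 0" by (rule sum_lessThan_telescope)
  finally have "x k - x 0 - (\<Sum>l<k. t l *\<^sub>R G l) = (\<Sum>l<k. x (Suc l) - x l - t l *\<^sub>R G l)" by simp
  also have "norm \<dots> \<le> (\<Sum>l<k. norm (x (Suc l) - x l - t l *\<^sub>R G l))" by (rule norm_sum)
  also have "\<dots> \<le> (\<Sum>l<k. r)" by (rule sum_mono) (use assms in auto)
  finally show ?thesis by simp
qed

lemma sum_bound2:
  fixes G H :: "nat \<Rightarrow> 'a::real_normed_vector"
  assumes "\<And>l. l < k \<Longrightarrow> norm (t l *\<^sub>R G l - s *\<^sub>R H l) \<le> r"
  shows "norm ((\<Sum>l<k. t l *\<^sub>R G l) - s *\<^sub>R (\<Sum>l<k. H l)) \<le> real k * r"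
proof -
  have "(\<Sum>l<k. t l *\<^sub>R G l) - s *\<^sub>R (\<Sum>l<k. H l) = (\<Sum>l<k. t l *\<^sub>R G l - s *\<^sub>R H l)"
    by (simp add: sum_subtractf scaleR_sum_right)
  also have "norm \<dots> \<le> (\<Sum>l<k. norm (t l *\<^sub>R G l - s *\<^sub>R H l))" by (rule norm_sum)
  also have "\<dots> \<le> (\<Sum>l<k. r)" by (rule sum_mono) (use assms in auto)
  finally show ?thesis by simp
qed

lemma tt_bound:
  fixes p k l :: nat
  assumes p: "p \<ge> 1" and k: "k \<ge> 1" and l: "l < k"
  shows "\<bar>1 / (real (p * k + l + 1) + 1) - 1 / (real p * real k)\<bar> \<le> (real k + 1) / (real p)^2"
    and "0 \<le> 1 / (real (p * k + l + 1) + 1)"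
    and "1 / (real (p * k + l + 1) + 1) \<le> 1 / real p"
    and "1 / (real (p * k + l + 1) + 1) \<le> 1"
proof -
  define q where "q = real p * real k"
  define u where "u = real (p * k + l + 1) + 1"
  have u: "u = q + real l + 2" by (simp add: u_def q_def)
  have k1: "real k \<ge> 1" using k by simp
  have pq: "real p \<le> q" using mult_left_mono[OF k1, of "real p"] by (simp add: q_def)
  have p1: "real p \<ge> 1" using p by simp
  have q0: "q > 0" using pq p1 by simp
  have uq: "q \<le> u" using u by simp
  have "1 / q - 1 / u = (u - q) / (q * u)" using q0 uq by (simp add: field_simps)
  moreover have "1 / u \<le> 1 / q" using q0 uq by (simp add: frac_le)
  ultimately have "\<bar>1 / u - 1 / q\<bar> = (u - q) / (q * u)" by simp
  also have "\<dots> \<le> (real k + 1) / (real p * real p)"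
  proof (rule frac_le)
    show "0 \<le> real k + 1" by simp
    show "u - q \<le> real k + 1" using u l by simp
    show "0 < real p * real p" using p1 by simp
    show "real p * real p \<le> q * u" using pq uq p1 by (intro mult_mono) auto
  qed
  finally show "\<bar>1 / (real (p * k + l + 1) + 1) - 1 / (real p * real k)\<bar> \<le> (real k + 1) / (real p)^2"
    by (simp add: u_def q_def power2_eq_square)
  show "0 \<le> 1 / (real (p * k + l + 1) + 1)" by simp
  have "real p \<le> u" using pq uq by simp
  then show "1 / (real (p * k + l + 1) + 1) \<le> 1 / real p" using p1 by (simp add: u_def frac_le)
  show "1 / (real (p * k + l + 1) + 1) \<le> 1" by (simp add: divide_le_eq)
qed

lemma chain_step:
  fixes Yj Z :: "real^'n::finite^'n"
  assumes Z: "spd Z" and Y: "spd Yj" and qZ: "qbnd c C Z" and qY: "qbnd cy Cy Yj"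
    and c: "c > 0" and cy: "cy > 0" and t: "0 \<le> t" "t \<le> 1"
    and A: "A > 0" "A \<le> cy / C" and B: "Cy / c \<le> B" and nY: "norm Yj \<le> Ny" and nZ: "norm Z \<le> NZ"
  shows "spd (thompson_geo Z t Yj)"
    and "qbnd (c * min 1 (cy / C)) (C * max 1 (Cy / c)) (thompson_geo Z t Yj)"
    and "norm (thompson_geo Z t Yj - Z - t *\<^sub>R Fj Yj Z) \<le> Rc A B * t^2 * (Ny + NZ)"
    and "norm (thompson_geo Z t Yj - Z) \<le> t * (Ny / A + Lc A B * NZ + Rc A B * (Ny + NZ))"
proof -
  note st = step[OF Z Y qZ qY c cy t A B]
  show "spd (thompson_geo Z t Yj)" by (rule st(1))
  show "qbnd (c * min 1 (cy / C)) (C * max 1 (Cy / c)) (thompson_geo Z t Yj)" by (rule st(2))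
  have cb: "A \<le> lam_min (Yj ** matrix_inv Z)" "lam_min (Yj ** matrix_inv Z) \<le> lam_max (Yj ** matrix_inv Z)"
       "lam_max (Yj ** matrix_inv Z) \<le> B" using coef_bounds[OF Z Y qZ qY c cy A B] by auto
  have B0: "B > 0" using cb A by linarith
  have Rc0: "Rc A B \<ge> 0" using Rc_nonneg[of A B] A B0 by simp
  have Lc0: "Lc A B \<ge> 0" using A B0 by (simp add: Lc_def)
  have "Rc A B * t^2 * (norm Yj + norm Z) \<le> Rc A B * t^2 * (Ny + NZ)"
    using nY nZ Rc0 by (intro mult_left_mono) auto
  with st(3) show r: "norm (thompson_geo Z t Yj - Z - t *\<^sub>R Fj Yj Z) \<le> Rc A B * t^2 * (Ny + NZ)"
    by linarith
  have Fb: "norm (Fj Yj Z) \<le> norm Yj / A + Lc A B * norm Z" by (rule Fj_bound[OF Z Y qZ qY c cy A B])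
  also have "\<dots> \<le> Ny / A + Lc A B * NZ"
    using nY nZ A Lc0 by (intro add_mono divide_right_mono mult_left_mono) auto
  finally have Fb2: "norm (Fj Yj Z) \<le> Ny / A + Lc A B * NZ" .
  have "norm (thompson_geo Z t Yj - Z) \<le> norm (thompson_geo Z t Yj - Z - t *\<^sub>R Fj Yj Z) + norm (t *\<^sub>R Fj Yj Z)"
    using norm_triangle_ineq[of "thompson_geo Z t Yj - Z - t *\<^sub>R Fj Yj Z" "t *\<^sub>R Fj Yj Z"] by simp
  also have "\<dots> \<le> Rc A B * t^2 * (Ny + NZ) + t * (Ny / A + Lc A B * NZ)"
    using r Fb2 t by (intro add_mono) (auto intro: mult_left_mono)
  also have "Rc A B * t^2 * (Ny + NZ) \<le> Rc A B * t * (Ny + NZ)"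
  proof -
    have "t^2 \<le> t" using t by (simp add: power2_eq_square mult_left_le_one_le)
    moreover have "Ny + NZ \<ge> 0" using nY nZ by (meson add_nonneg_nonneg norm_ge_zero order_trans)
    ultimately show ?thesis using Rc0 by (intro mult_right_mono mult_left_mono) auto
  qed
  finally show "norm (thompson_geo Z t Yj - Z) \<le> t * (Ny / A + Lc A B * NZ + Rc A B * (Ny + NZ))"
    by (simp add: algebra_simps)
qed

lemma ch_Suc:
  "fold f [a ..< a + Suc l + 1] X = f (a + l + 1) (fold f [a ..< a + l + 1] X)"
proof -
  have "[a ..< a + Suc l + 1] = [a ..< a + l + 1] @ [a + l + 1]" by simp
  then show ?thesis by simp
qed

lemma jidx_step:
  assumes "l < k"
  shows "jidx k (p * k + l + 1) = l + 1"
proof -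
  have md: "(p * k + l + 1) mod k = (l + 1) mod k" by (simp add: mod_add_left_eq[symmetric] add.assoc)
  show ?thesis
  proof (cases "l + 1 < k")
    case True then show ?thesis using md by (simp add: jidx_def)
  next
    case False
    then have "l + 1 = k" using assms by simp
    then show ?thesis using md by (simp add: jidx_def)
  qed
qed

lemma F_split:
  fixes Y :: "nat \<Rightarrow> real^'n::finite^'n"
  shows "(\<Sum>j=1..k. Fj (Y j) X) = (\<Sum>j=1..k. m_coef (Y j) X *\<^sub>R Y j) + (\<Sum>j=1..k. o_coef (Y j) X) *\<^sub>R X"
  by (simp add: Fj_def sum.distrib scaleR_sum_left)

theorem lemma4p5:
  fixes Y :: "nat \<Rightarrow> real^'n::finite^'n" and k :: nat
    and Xs :: "real^'n^'n" and KK :: "(real^'n^'n) set"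
  assumes "k \<ge> 1"
    and "\<forall>j\<in>{1..k}. spd (Y j)"
    and "spd Xs"
    and "(\<Sum>j=1..k. m_coef (Y j) Xs *\<^sub>R Y j) + (\<Sum>j=1..k. o_coef (Y j) Xs) *\<^sub>R Xs = 0"
    and "compact KK" and "KK \<subseteq> {A. spd A}" and "Xs \<in> KK"
  shows "\<exists>CO CK. CO > 0 \<and> CK > 0 \<and>
           (\<forall>X\<in>KK. \<forall>p::nat. p \<ge> 1 \<longrightarrow>
              norm (T_map Y k p X - X) \<le> CK / real p * norm (X - Xs) + CO / (real p)^2) \<and>
           (\<forall>p::nat. p \<ge> 1 \<longrightarrow> norm (T_map Y k p Xs - Xs) \<le> CO / (real p)^2)"
proof -
  note k1 = assms(1)
  have Yspd: "\<And>j. j \<in> {1..k} \<Longrightarrow> spd (Y j)" using assms(2) by blast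
  have KKspd: "\<And>X. X \<in> KK \<Longrightarrow> spd X" using assms(6) by blast
  define Ny where "Ny = (\<Sum>j=1..k. norm (Y j))"
  have nY: "norm (Y j) \<le> Ny" if "j \<in> {1..k}" for j
    unfolding Ny_def using that by (intro member_le_sum) auto
  have Ny0: "Ny \<ge> 0" unfolding Ny_def by (simp add: sum_nonneg)
  have "\<forall>j\<in>{1..k}. \<exists>c>0. \<forall>v::real^'n. c * (norm v)^2 \<le> qf (Y j) v"
    using Yspd spd_lower by blast
  then obtain cf where cf: "\<And>j. j \<in> {1..k} \<Longrightarrow> cf j > 0 \<and> (\<forall>v::real^'n. cf j * (norm v)^2 \<le> qf (Y j) v)"
    by metis
  define cy where "cy = Min (cf ` {1..k})"
  have fin: "finite (cf ` {1..k})" "cf ` {1..k} \<noteq> {}" using k1 by auto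
  have cy0: "cy > 0"
  proof -
    have "cy \<in> cf ` {1..k}" unfolding cy_def using fin by (rule Min_in)
    then show ?thesis using cf by auto
  qed
  have cyle: "cy \<le> cf j" if "j \<in> {1..k}" for j
    unfolding cy_def using fin that by (intro Min_le) auto
  define Cy where "Cy = real CARD('n) * Ny + 1"
  have qY: "qbnd cy Cy (Y j)" if j: "j \<in> {1..k}" for j
    unfolding qbnd_def
  proof
    fix v :: "real^'n"
    have "cy * (norm v)^2 \<le> cf j * (norm v)^2" using cyle[OF j] by (intro mult_right_mono) auto
    also have "\<dots> \<le> qf (Y j) v" using cf[OF j] by blast
    finally have 1: "cy * (norm v)^2 \<le> qf (Y j) v" .
    have "qf (Y j) v \<le> real CARD('n) * Ny * (norm v)^2" by (rule qf_upper[OF nY[OF j]])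
    also have "\<dots> \<le> Cy * (norm v)^2" by (simp add: Cy_def algebra_simps)
    finally show "cy * (norm v)^2 \<le> qf (Y j) v \<and> qf (Y j) v \<le> Cy * (norm v)^2" using 1 by simp
  qed
  have Cy0: "Cy > 0" unfolding Cy_def using Ny0 by (simp add: add_nonneg_pos)
  obtain c0 where c0: "c0 > 0" and c0KK: "\<And>X v. X \<in> KK \<Longrightarrow> c0 * (norm v)^2 \<le> qf X v"
    using compact_lower[OF assms(5) _ assms(6)] assms(7) by blast
  obtain R0 where R0: "\<And>X. X \<in> KK \<Longrightarrow> norm X \<le> R0"
    using compact_imp_bounded[OF assms(5)] unfolding bounded_iff by blast
  define R where "R = max R0 0"
  have R: "\<And>X. X \<in> KK \<Longrightarrow> norm X \<le> R" and R0': "R \<ge> 0" using R0 by (auto simp: R_def intro: le_max_iff_disj[THEN iffD2])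
  define C0 where "C0 = real CARD('n) * R + 1"
  have C0: "C0 > 0" unfolding C0_def using R0' by (simp add: add_nonneg_pos)
  have qKK: "qbnd c0 C0 X" if "X \<in> KK" for X
    unfolding qbnd_def
  proof
    fix v :: "real^'n"
    have "qf X v \<le> real CARD('n) * R * (norm v)^2" by (rule qf_upper[OF R[OF that]])
    also have "\<dots> \<le> C0 * (norm v)^2" by (simp add: C0_def algebra_simps)
    finally show "c0 * (norm v)^2 \<le> qf X v \<and> qf X v \<le> C0 * (norm v)^2" using c0KK[OF that] by simp
  qed
  define cs where "cs l = fst (cseq c0 C0 cy Cy l)" for l
  define Cs where "Cs l = snd (cseq c0 C0 cy Cy l)" for l
  have csp: "cs l > 0" "Cs l > 0" for l using cseq_pos[OF c0 C0 cy0 Cy0] by (auto simp: cs_def Cs_def)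
  have csm: "cs k \<le> cs l" "Cs l \<le> Cs k" if "l \<le> k" for l
    using cseq_mono[OF c0 C0 cy0 Cy0 that] by (auto simp: cs_def Cs_def)
  have cs_Suc: "cs (Suc l) = cs l * min 1 (cy / Cs l)" "Cs (Suc l) = Cs l * max 1 (Cy / cs l)" for l
    by (simp_all add: cs_def Cs_def)
  define A where "A = cy / Cs k"
  define B where "B = Cy / cs k"
  have A0: "A > 0" unfolding A_def using cy0 csp by simp
  have B0: "B > 0" unfolding B_def using Cy0 csp by simp
  have Al: "A \<le> cy / Cs l" if "l \<le> k" for l
    unfolding A_def using csm[OF that] csp cy0 by (intro divide_left_mono) auto
  have Bl: "Cy / cs l \<le> B" if "l \<le> k" for l
    unfolding B_def using csm[OF that] csp Cy0 by (intro divide_left_mono) auto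
  have Rc0: "Rc A B \<ge> 0" using Rc_nonneg A0 B0 by simp
  have Lc0: "Lc A B \<ge> 0" using A0 B0 by (simp add: Lc_def)
  define al where "al = Ny / A + Rc A B * Ny"
  define be where "be = Lc A B + Rc A B"
  have al0: "al \<ge> 0" unfolding al_def using Ny0 A0 Rc0 by simp
  have be0: "be \<ge> 0" unfolding be_def using Lc0 Rc0 by simp
  define Ns where "Ns l = nseq R al be l" for l
  define N where "N = Ns k"
  have Nsm: "Ns l \<le> N" if "l \<le> k" for l unfolding N_def Ns_def using nseq_mono[OF R0' al0 be0 that] by simp
  have Ns0: "0 \<le> Ns l" for l unfolding Ns_def using nseq_mono[OF R0' al0 be0 order_refl] by simp
  define D where "D = Ny / A + Lc A B * N + Rc A B * (Ny + N)"
  have D0: "D \<ge> 0" unfolding D_def using Ny0 A0 Lc0 Rc0 Ns0[of k] by (simp add: N_def)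
  define Ka where "Ka = Cy * real CARD('n) / (cs k)^2"
  define LF where "LF = 2 * Ka / A^2 * Ny + (2 * Ka / A + 2 * B * Ka / A^2) * N + Lc A B"
  have Ka0: "Ka \<ge> 0" unfolding Ka_def using Cy0 by simp
  have LF0: "LF \<ge> 0" unfolding LF_def using Ka0 A0 B0 Ny0 Ns0[of k] Lc0 by (simp add: N_def)
  define BF where "BF = Ny / A + Lc A B * N"
  have BF0: "BF \<ge> 0" unfolding BF_def using Ny0 A0 Lc0 Ns0[of k] by (simp add: N_def)
  define good where "good (Z::real^'n^'n) \<longleftrightarrow> spd Z \<and> qbnd (cs k) (Cs k) Z \<and> norm Z \<le> N" for Z
  have goodKK: "good X" if "X \<in> KK" for X
  proof -
    have "qbnd (cs 0) (Cs 0) X" using qKK[OF that] by (simp add: cs_def Cs_def)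
    then have "qbnd (cs k) (Cs k) X" by (rule qbnd_mono[OF _ csm[OF le0]])
    moreover have "norm X \<le> N" using R[OF that] Nsm[of 0] by (simp add: Ns_def)
    ultimately show ?thesis using KKspd[OF that] by (simp add: good_def)
  qed
  have Fbound: "norm (Fj (Y j) Z) \<le> BF" if "good Z" "j \<in> {1..k}" for Z j
  proof -
    have gz: "spd Z" "qbnd (cs k) (Cs k) Z" using that by (auto simp: good_def)
    have "norm (Fj (Y j) Z) \<le> norm (Y j) / A + Lc A B * norm Z"
      by (rule Fj_bound[OF gz(1) Yspd[OF that(2)] gz(2) qY[OF that(2)] csp(1) cy0 A0 Al[OF order_refl] Bl[OF order_refl]])
    also have "\<dots> \<le> BF" unfolding BF_def using that nY A0 Lc0
      by (intro add_mono divide_right_mono mult_left_mono) (auto simp: good_def)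
    finally show ?thesis .
  qed
  have Flip: "norm (Fj (Y j) Z - Fj (Y j) Z') \<le> LF * norm (Z - Z')" if "good Z" "good Z'" "j \<in> {1..k}" for Z Z' j
  proof -
    have gz: "spd Z" "qbnd (cs k) (Cs k) Z" "norm Z \<le> N" using that by (auto simp: good_def)
    have gz': "spd Z'" "qbnd (cs k) (Cs k) Z'" using that by (auto simp: good_def)
    have "norm (Fj (Y j) Z - Fj (Y j) Z') \<le>
      (2 * (Cy * real CARD('n) / (cs k)^2) / A^2 * norm (Y j)
      + (2 * (Cy * real CARD('n) / (cs k)^2) / A + 2 * B * (Cy * real CARD('n) / (cs k)^2) / A^2) * N + Lc A B) * norm (Z - Z')"
      by (rule Fj_lip[OF gz(1) gz'(1) Yspd[OF that(3)] gz(2) gz'(2) qY[OF that(3)] csp(1) cy0 A0 Al[OF order_refl] Bl[OF order_refl] gz(3)])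
    also have "\<dots> \<le> LF * norm (Z - Z')" unfolding LF_def Ka_def[symmetric]
    proof (rule mult_right_mono)
      have "2 * Ka / A^2 * norm (Y j) \<le> 2 * Ka / A^2 * Ny"
        using nY[OF that(3)] Ka0 A0 by (intro mult_left_mono) auto
      then show "2 * Ka / A\<^sup>2 * norm (Y j) + (2 * Ka / A + 2 * B * Ka / A\<^sup>2) * N + Lc A B
          \<le> 2 * Ka / A\<^sup>2 * Ny + (2 * Ka / A + 2 * B * Ka / A\<^sup>2) * N + Lc A B" by linarith
    qed simp
    finally show ?thesis .
  qed
  define CK where "CK = LF + 1"
  define CO where "CO = real k * Rc A B * (Ny + N) + real k * ((real k + 1) * BF + LF * (real k * D)) + 1"
  have main: "norm (T_map Y k p X - X) \<le> CK / real p * norm (X - Xs) + CO / (real p)^2"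
    if X: "X \<in> KK" and p: "p \<ge> 1" for X p
  proof -
    define ch where "ch l = fold (S_map Y k) [p * k + 1 ..< p * k + l + 1] X" for l
    define tt where "tt l = 1 / (real (p * k + l + 1) + 1)" for l
    have ch0: "ch 0 = X" by (simp add: ch_def)
    have chS: "ch (Suc l) = thompson_geo (ch l) (tt l) (Y (l + 1))" if "l < k" for l
    proof -
      have "ch (Suc l) = S_map Y k (p * k + l + 1) (ch l)"
        unfolding ch_def using ch_Suc[of "S_map Y k" "p * k + 1" l X] by (simp add: add.assoc)
      then show ?thesis using jidx_step[OF that, of p] by (simp add: S_map_def tt_def)
    qed
    have Tch: "T_map Y k p X = ch k"
      by (simp add: T_map_def ch_def algebra_simps)
    have p1: "real p \<ge> 1" using p by simp
    note ttb = tt_bound[OF p k1]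
    have inv: "l \<le> k \<longrightarrow> spd (ch l) \<and> qbnd (cs l) (Cs l) (ch l) \<and> norm (ch l) \<le> Ns l \<and> norm (ch l - X) \<le> real l * D / real p" for l
    proof (induction l)
      case 0
      show ?case using KKspd[OF X] qKK[OF X] R[OF X] ch0 by (simp add: cs_def Cs_def Ns_def)
    next
      case (Suc l)
      show ?case
      proof
        assume lk: "Suc l \<le> k"
        then have lk': "l < k" "l \<le> k" by auto
        from Suc.IH lk' have IH: "spd (ch l)" "qbnd (cs l) (Cs l) (ch l)" "norm (ch l) \<le> Ns l"
          "norm (ch l - X) \<le> real l * D / real p" by auto
        have j: "l + 1 \<in> {1..k}" using lk by simp
        have t: "0 \<le> tt l" "tt l \<le> 1" "tt l \<le> 1 / real p" using ttb(2-4)[OF lk'(1)] by (auto simp: tt_def)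
        note cst = chain_step[OF IH(1) Yspd[OF j] IH(2) qY[OF j] csp(1) cy0 t(1,2) A0 Al[OF lk'(2)] Bl[OF lk'(2)] nY[OF j] IH(3)]
        have s1: "spd (ch (Suc l))" using cst(1) chS[OF lk'(1)] by simp
        have s2: "qbnd (cs (Suc l)) (Cs (Suc l)) (ch (Suc l))" using cst(2) chS[OF lk'(1)] by (simp add: cs_Suc)
        have dn: "norm (ch (Suc l) - ch l) \<le> tt l * (Ny / A + Lc A B * Ns l + Rc A B * (Ny + Ns l))"
          using cst(4) chS[OF lk'(1)] by simp
        have "Ny / A + Lc A B * Ns l + Rc A B * (Ny + Ns l) = al + be * Ns l"
          by (simp add: al_def be_def algebra_simps)
        then have dn2: "norm (ch (Suc l) - ch l) \<le> al + be * Ns l"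
          using dn t al0 be0 Ns0[of l] by (metis (no_types, lifting) add_nonneg_nonneg mult_le_one mult_nonneg_nonneg order_trans mult_left_le_one_le)
        have s3: "norm (ch (Suc l)) \<le> Ns (Suc l)"
          using norm_triangle_ineq[of "ch (Suc l) - ch l" "ch l"] dn2 IH(3) by (simp add: Ns_def algebra_simps)
        have "Ny / A + Lc A B * Ns l + Rc A B * (Ny + Ns l) \<le> D"
          unfolding D_def using Nsm[OF lk'(2)] Lc0 Rc0 by (intro add_mono mult_left_mono) auto
        then have "norm (ch (Suc l) - ch l) \<le> tt l * D" using dn t by (meson mult_left_mono order_trans)
        also have "\<dots> \<le> D / real p" using t D0 by (metis mult_right_mono divide_inverse mult.commute mult_1)
        finally have dn3: "norm (ch (Suc l) - ch l) \<le> D / real p" .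
        have "norm (ch (Suc l) - X) \<le> norm (ch (Suc l) - ch l) + norm (ch l - X)"
          using norm_triangle_ineq[of "ch (Suc l) - ch l" "ch l - X"] by simp
        also have "\<dots> \<le> D / real p + real l * D / real p" using dn3 IH(4) by simp
        also have "\<dots> = real (Suc l) * D / real p" by (simp add: add_divide_distrib[symmetric] algebra_simps)
        finally have s4: "norm (ch (Suc l) - X) \<le> real (Suc l) * D / real p" .
        show "spd (ch (Suc l)) \<and> qbnd (cs (Suc l)) (Cs (Suc l)) (ch (Suc l)) \<and> norm (ch (Suc l)) \<le> Ns (Suc l)
            \<and> norm (ch (Suc l) - X) \<le> real (Suc l) * D / real p" using s1 s2 s3 s4 by simp
      qed
    qed
    have gch: "good (ch l)" "norm (ch l - X) \<le> real k * D / real p" if "l \<le> k" for l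
    proof -
      from inv[of l] that have I: "spd (ch l)" "qbnd (cs l) (Cs l) (ch l)" "norm (ch l) \<le> Ns l"
        "norm (ch l - X) \<le> real l * D / real p" by auto
      have "qbnd (cs k) (Cs k) (ch l)" by (rule qbnd_mono[OF I(2) csm[OF that]])
      then show "good (ch l)" using I(1,3) Nsm[OF that] by (simp add: good_def)
      have "real l * D / real p \<le> real k * D / real p"
        using that D0 p1 by (intro divide_right_mono mult_right_mono) auto
      then show "norm (ch l - X) \<le> real k * D / real p" using I(4) by linarith
    qed
    define G where "G l = Fj (Y (Suc l)) (ch l)" for l
    define H where "H l = Fj (Y (Suc l)) X" for l
    define s where "s = 1 / (real p * real k)"
    have e1: "norm (ch k - ch 0 - (\<Sum>l<k. tt l *\<^sub>R G l)) \<le> real k * (Rc A B * (Ny + N) / (real p)^2)"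
    proof (rule telescope_bound)
      fix l assume lk: "l < k"
      have j: "l + 1 \<in> {1..k}" using lk by simp
      have t: "0 \<le> tt l" "tt l \<le> 1" "tt l \<le> 1 / real p" using ttb(2-4)[OF lk] by (auto simp: tt_def)
      have gl: "good (ch l)" using gch lk by simp
      have st: "norm (thompson_geo (ch l) (tt l) (Y (l + 1)) - ch l - tt l *\<^sub>R Fj (Y (l + 1)) (ch l))
          \<le> Rc A B * (tt l)^2 * (Ny + N)"
        using gl by (intro chain_step(3)[OF _ Yspd[OF j] _ qY[OF j] csp(1) cy0 t(1,2) A0 Al Bl nY[OF j]]) (auto simp: good_def)
      have "(tt l)^2 \<le> (1 / real p)^2" using t by (intro power_mono) auto
      then have "Rc A B * (tt l)^2 * (Ny + N) \<le> Rc A B * (1 / real p)^2 * (Ny + N)"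
        using Rc0 Ny0 Ns0[of k] by (intro mult_right_mono mult_left_mono) (auto simp: N_def)
      with st show "norm (ch (Suc l) - ch l - tt l *\<^sub>R G l) \<le> Rc A B * (Ny + N) / (real p)^2"
        using chS[OF lk] by (simp add: G_def power_divide)
    qed
    have e2: "norm ((\<Sum>l<k. tt l *\<^sub>R G l) - s *\<^sub>R (\<Sum>l<k. H l))
        \<le> real k * ((real k + 1) / (real p)^2 * BF + LF * (real k * D) / (real p)^2)"
    proof (rule sum_bound2)
      fix l assume lk: "l < k"
      have j: "Suc l \<in> {1..k}" using lk by simp
      have t: "0 \<le> tt l" "tt l \<le> 1 / real p" using ttb(2,3)[OF lk] by (auto simp: tt_def)
      have ts: "\<bar>tt l - s\<bar> \<le> (real k + 1) / (real p)^2" using ttb(1)[OF lk] by (simp add: tt_def s_def)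
      have gl: "good (ch l)" and dl: "norm (ch l - X) \<le> real k * D / real p" using gch lk by auto
      have Hb: "norm (H l) \<le> BF" unfolding H_def by (rule Fbound[OF goodKK[OF X] j])
      have GH: "norm (G l - H l) \<le> LF * (real k * D / real p)"
      proof -
        have "norm (G l - H l) \<le> LF * norm (ch l - X)" unfolding G_def H_def by (rule Flip[OF gl goodKK[OF X] j])
        also have "\<dots> \<le> LF * (real k * D / real p)" using dl LF0 by (rule mult_left_mono)
        finally show ?thesis .
      qed
      have "tt l *\<^sub>R G l - s *\<^sub>R H l = (tt l - s) *\<^sub>R H l + tt l *\<^sub>R (G l - H l)"
        by (simp add: algebra_simps)
      then have "norm (tt l *\<^sub>R G l - s *\<^sub>R H l) \<le> \<bar>tt l - s\<bar> * norm (H l) + tt l * norm (G l - H l)"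
        using norm_triangle_ineq[of "(tt l - s) *\<^sub>R H l" "tt l *\<^sub>R (G l - H l)"] t by simp
      also have "\<dots> \<le> (real k + 1) / (real p)^2 * BF + (1 / real p) * (LF * (real k * D / real p))"
        using ts Hb t GH BF0 by (intro add_mono mult_mono) auto
      also have "\<dots> = (real k + 1) / (real p)^2 * BF + LF * (real k * D) / (real p)^2"
        by (simp add: power2_eq_square)
      finally show "norm (tt l *\<^sub>R G l - s *\<^sub>R H l) \<le> (real k + 1) / (real p)^2 * BF + LF * (real k * D) / (real p)^2" .
    qed
    have sumH: "(\<Sum>l<k. H l) = (\<Sum>j=1..k. Fj (Y j) X)"
      unfolding H_def by (simp add: sum.atLeast1_atMost_eq)
    have FXs: "(\<Sum>j=1..k. Fj (Y j) Xs) = 0" by (subst F_split) (rule assms(4))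
    have e3: "norm (\<Sum>l<k. H l) \<le> real k * (LF * norm (X - Xs))"
    proof -
      have "(\<Sum>l<k. H l) = (\<Sum>j=1..k. Fj (Y j) X - Fj (Y j) Xs)"
        using FXs by (simp add: sumH sum_subtractf)
      also have "norm \<dots> \<le> (\<Sum>j=1..k. norm (Fj (Y j) X - Fj (Y j) Xs))" by (rule norm_sum)
      also have "\<dots> \<le> (\<Sum>j=1..k. LF * norm (X - Xs))"
        by (rule sum_mono) (rule Flip[OF goodKK[OF X] goodKK[OF assms(7)]])
      finally show ?thesis by simp
    qed
    have "T_map Y k p X - X = (ch k - ch 0 - (\<Sum>l<k. tt l *\<^sub>R G l))
        + ((\<Sum>l<k. tt l *\<^sub>R G l) - s *\<^sub>R (\<Sum>l<k. H l)) + s *\<^sub>R (\<Sum>l<k. H l)"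
      by (simp add: Tch ch0)
    then have tri: "norm (T_map Y k p X - X) \<le> norm (ch k - ch 0 - (\<Sum>l<k. tt l *\<^sub>R G l))
        + norm ((\<Sum>l<k. tt l *\<^sub>R G l) - s *\<^sub>R (\<Sum>l<k. H l)) + norm (s *\<^sub>R (\<Sum>l<k. H l))"
      using norm_triangle_ineq[of "ch k - ch 0 - (\<Sum>l<k. tt l *\<^sub>R G l)" "(\<Sum>l<k. tt l *\<^sub>R G l) - s *\<^sub>R (\<Sum>l<k. H l)"]
        norm_triangle_ineq[of "(ch k - ch 0 - (\<Sum>l<k. tt l *\<^sub>R G l)) + ((\<Sum>l<k. tt l *\<^sub>R G l) - s *\<^sub>R (\<Sum>l<k. H l))" "s *\<^sub>R (\<Sum>l<k. H l)"]
      by simp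
    have s0: "s \<ge> 0" by (simp add: s_def)
    have "norm (s *\<^sub>R (\<Sum>l<k. H l)) = s * norm (\<Sum>l<k. H l)" using s0 by simp
    also have "\<dots> \<le> s * (real k * (LF * norm (X - Xs)))" using e3 s0 by (rule mult_left_mono)
    also have "s * (real k * (LF * norm (X - Xs))) = LF / real p * norm (X - Xs)"
      using k1 by (simp add: s_def)
    finally have e4: "norm (s *\<^sub>R (\<Sum>l<k. H l)) \<le> LF / real p * norm (X - Xs)" .
    have fin: "norm (T_map Y k p X - X) \<le> real k * (Rc A B * (Ny + N) / (real p)^2)
        + real k * ((real k + 1) / (real p)^2 * BF + LF * (real k * D) / (real p)^2) + LF / real p * norm (X - Xs)"
      using tri e1 e2 e4 by linarith
    have "real k * (Rc A B * (Ny + N) / (real p)^2)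
        + real k * ((real k + 1) / (real p)^2 * BF + LF * (real k * D) / (real p)^2) = (CO - 1) / (real p)^2"
      using p1 by (simp add: CO_def field_simps)
    also have "\<dots> \<le> CO / (real p)^2" by (simp add: divide_right_mono)
    finally have 1: "real k * (Rc A B * (Ny + N) / (real p)^2)
        + real k * ((real k + 1) / (real p)^2 * BF + LF * (real k * D) / (real p)^2) \<le> CO / (real p)^2" .
    have 2: "LF / real p * norm (X - Xs) \<le> CK / real p * norm (X - Xs)"
      unfolding CK_def using p1 by (intro mult_right_mono divide_right_mono) auto
    show ?thesis using fin 1 2 by linarith
  qed
  have CO0: "CO > 0" unfolding CO_def using Rc0 Ny0 Ns0[of k] BF0 LF0 D0
    by (simp add: N_def add_nonneg_pos)
  have CK0: "CK > 0" unfolding CK_def using LF0 by simp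
  show ?thesis
  proof (intro exI conjI)
    show "CO > 0" by (rule CO0)
    show "CK > 0" by (rule CK0)
    show "\<forall>X\<in>KK. \<forall>p::nat. p \<ge> 1 \<longrightarrow>
              norm (T_map Y k p X - X) \<le> CK / real p * norm (X - Xs) + CO / (real p)^2"
      using main by blast
    show "\<forall>p::nat. p \<ge> 1 \<longrightarrow> norm (T_map Y k p Xs - Xs) \<le> CO / (real p)^2"
      using main[OF assms(7)] by simp
  qed
qed

end
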